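(* Let $n\ge6$ and let $U_i=U[z_i,\lambda_i]$, $i=1,2,3$, be three bubbles with $Q:=\max\{q_{12},q_{13},q_{23}\}<\delta$. There exist $\delta_0>0$ and $C>0$ depending only on $n$ such that if $\delta\le\delta_0$ then \[\int_{\mathbb{R}^n}U_1U_2U_3\le C\,Q^{3/2}\log(1/Q)\ \text{ if }n=6,\qquad \int_{\mathbb{R}^n}U_1^{p-1}U_2U_3\le C\,Q^{\frac{n-1}{n-2}}|\log Q|^{\frac{n-5}{n}}\ \text{ if }n\ge7.\]
   Context: $p=\frac{n+2}{n-2}$; $U[z,\lambda](x)=(n(n-2))^{\frac{n-2}{4}}\big(\frac{\lambda}{1+\lambda^2|x-z|^2}\big)^{\frac{n-2}{2}}$; $q_{ij}=\big(\frac{\lambda_i}{\lambda_j}+\frac{\lambda_j}{\lambda_i}+\lambda_i\lambda_j|z_i-z_j|^2\big)^{-\frac{n-2}{2}}$. *)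

theory Defs
  imports "HOL-Analysis.Analysis"
begin

definition bubble :: "'a::euclidean_space \<Rightarrow> real \<Rightarrow> 'a \<Rightarrow> real" where
  "bubble z lam x =
     (real DIM('a) * (real DIM('a) - 2)) powr ((real DIM('a) - 2) / 4) *
     (lam / (1 + lam\<^sup>2 * (norm (x - z))\<^sup>2)) powr ((real DIM('a) - 2) / 2)"

definition qint :: "'a::euclidean_space \<Rightarrow> real \<Rightarrow> 'a \<Rightarrow> real \<Rightarrow> real" where
  "qint zi li zj lj =
     (li / lj + lj / li + li * lj * (norm (zi - zj))\<^sup>2) powr (- (real DIM('a) - 2) / 2)"

definition crit_exp :: "'a::euclidean_space itself \<Rightarrow> real" where
  "crit_exp _ = (real DIM('a) + 2) / (real DIM('a) - 2)"

end

theory Submission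
  imports Defs "HOL-Analysis.Analysis"
begin

lemma powr_has_int:
  fixes a b e :: real
  assumes "0 < a" "a \<le> b" "e \<noteq> -1"
  shows "((\<lambda>t. t powr e) has_integral (b powr (e+1) - a powr (e+1)) / (e+1)) {a..b}"
proof -
  have d: "((\<lambda>t. t powr (e+1) / (e+1)) has_real_derivative t powr e) (at t within {a..b})"
    if "t \<in> {a..b}" for t
  proof -
    have t: "t > 0" using that assms by auto
    have "((\<lambda>t. t powr (e+1)) has_real_derivative (e+1) * t powr (e+1-1)) (at t)"
      using t by (rule has_real_derivative_powr)  
    hence "((\<lambda>t. t powr (e+1) / (e+1)) has_real_derivative (e+1) * t powr (e+1-1) / (e+1)) (at t)"
      by (rule DERIV_cdivide)
    thus ?thesis using assms by (auto intro: has_field_derivative_at_within)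
  qed
  have "((\<lambda>t. t powr e) has_integral ((\<lambda>t. t powr (e+1) / (e+1)) b - (\<lambda>t. t powr (e+1) / (e+1)) a)) {a..b}"
    using assms d
    by (intro fundamental_theorem_of_calculus) (auto simp flip: has_real_derivative_iff_has_vector_derivative)
  thus ?thesis by (simp add: diff_divide_distrib)
qed

lemma inv_has_int:
  fixes a b :: real
  assumes "0 < a" "a \<le> b"
  shows "((\<lambda>t. 1 / t) has_integral (ln b - ln a)) {a..b}"
  using assms
  by (intro fundamental_theorem_of_calculus)
     (auto intro!: derivative_eq_intros simp flip: has_real_derivative_iff_has_vector_derivative
           simp: field_simps)

lemma K1a:
  fixes s \<alpha> \<beta> u :: real
  assumes "s > 0" "0 < \<alpha>" "\<alpha> \<le> \<beta>" "u \<le> \<beta>"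
  shows "(\<integral>\<^sup>+t. ennreal (t powr (-s-1) * indicator {\<alpha>..\<beta>} t) * indicator {u..} t \<partial>lborel)
         = ennreal ((max u \<alpha> powr (-s) - \<beta> powr (-s)) / s)"
proof -
  have eq: "ennreal (t powr (-s-1) * indicator {\<alpha>..\<beta>} t) * indicator {u..} t
        = ennreal (indicator {max u \<alpha>..\<beta>} t * t powr (-s-1))" for t
    by (auto simp: indicator_def)
  have "((\<lambda>t. t powr (-s-1)) has_integral (\<beta> powr (-s-1+1) - max u \<alpha> powr (-s-1+1)) / (-s-1+1)) {max u \<alpha>..\<beta>}"
    using assms by (intro powr_has_int) auto
  hence "(\<integral>\<^sup>+t. ennreal (indicator {max u \<alpha>..\<beta>} t * t powr (-s-1)) \<partial>lborel)
         = ennreal ((\<beta> powr (-s-1+1) - max u \<alpha> powr (-s-1+1)) / (-s-1+1))"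
    by (intro nn_integral_has_integral_lebesgue) auto
  also have "(\<beta> powr (-s-1+1) - max u \<alpha> powr (-s-1+1)) / (-s-1+1) = (max u \<alpha> powr (-s) - \<beta> powr (-s)) / s"
    using assms by (simp add: field_simps)
  finally show ?thesis by (simp add: eq)
qed

lemma K2a:
  fixes s \<alpha> u :: real
  assumes "s > 0" "0 < \<alpha>"
  shows "(\<integral>\<^sup>+t. ennreal (t powr (-s-1) * indicator {\<alpha>..} t) * indicator {u..} t \<partial>lborel)
         = ennreal (max u \<alpha> powr (-s) / s)"
proof -
  have eq: "ennreal (t powr (-s-1) * indicator {\<alpha>..} t) * indicator {u..} t
        = ennreal (indicator {max u \<alpha>..} t * t powr (-s-1))" for t
    by (auto simp: indicator_def)
  have "((\<lambda>t. t powr (-s-1)) has_integral -(max u \<alpha> powr (-s-1+1)) / (-s-1+1)) {max u \<alpha>..}"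
    using assms by (intro has_integral_powr_to_inf) auto
  hence "(\<integral>\<^sup>+t. ennreal (indicator {max u \<alpha>..} t * t powr (-s-1)) \<partial>lborel)
         = ennreal (-(max u \<alpha> powr (-s-1+1)) / (-s-1+1))"
    by (intro nn_integral_has_integral_lebesgue) auto
  also have "-(max u \<alpha> powr (-s-1+1)) / (-s-1+1) = max u \<alpha> powr (-s) / s"
    using assms by (simp add: field_simps)
  finally show ?thesis by (simp add: eq)
qed

lemma K1b:
  fixes \<alpha> \<beta> :: real and N :: nat
  assumes "0 < \<alpha>" "\<alpha> \<le> \<beta>"
  shows "(\<integral>\<^sup>+t. ennreal (t powr (-real N-1) * indicator {\<alpha>..\<beta>} t * t ^ N) \<partial>lborel)
         = ennreal (ln \<beta> - ln \<alpha>)"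
proof -
  have eq: "ennreal (t powr (-real N-1) * indicator {\<alpha>..\<beta>} t * t ^ N)
        = ennreal (indicator {\<alpha>..\<beta>} t * (1 / t))" for t
  proof (cases "t \<in> {\<alpha>..\<beta>}")
    case True
    hence t: "t > 0" using assms by auto
    have "t powr (-real N-1) * t ^ N = t powr (-real N-1) * t powr (real N)"
      using t by (simp add: powr_realpow)
    also have "\<dots> = t powr (-1)" by (simp add: powr_add[symmetric])
    finally show ?thesis using True t by (simp add: powr_minus divide_inverse)
  qed auto
  have "((\<lambda>t. 1/t) has_integral (ln \<beta> - ln \<alpha>)) {\<alpha>..\<beta>}"
    using assms by (intro inv_has_int) auto
  hence "(\<integral>\<^sup>+t. ennreal (indicator {\<alpha>..\<beta>} t * (1/t)) \<partial>lborel) = ennreal (ln \<beta> - ln \<alpha>)"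
    using assms by (intro nn_integral_has_integral_lebesgue) auto
  thus ?thesis by (simp add: eq)
qed

lemma K2b:
  fixes \<alpha> s :: real and N :: nat
  assumes "0 < \<alpha>" "s > real N"
  shows "(\<integral>\<^sup>+t. ennreal (t powr (-s-1) * indicator {\<alpha>..} t * t ^ N) \<partial>lborel)
         = ennreal (\<alpha> powr (real N - s) / (s - real N))"
proof -
  have eq: "ennreal (t powr (-s-1) * indicator {\<alpha>..} t * t ^ N)
        = ennreal (indicator {\<alpha>..} t * t powr (real N - s - 1))" for t
  proof (cases "t \<in> {\<alpha>..}")
    case True
    hence t: "t > 0" using assms by auto
    have "t powr (-s-1) * t ^ N = t powr (-s-1) * t powr (real N)"
      using t by (simp add: powr_realpow)
    also have "\<dots> = t powr ((-s-1) + real N)" by (simp add: powr_add)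
    also have "\<dots> = t powr (real N - s - 1)" by (rule arg_cong[where f="\<lambda>e. t powr e"]) simp
    finally show ?thesis using True t by simp
  qed auto
  have "((\<lambda>t. t powr (real N - s - 1)) has_integral -(\<alpha> powr (real N - s - 1 + 1)) / (real N - s - 1 + 1)) {\<alpha>..}"
    using assms by (intro has_integral_powr_to_inf) auto
  hence "(\<integral>\<^sup>+t. ennreal (indicator {\<alpha>..} t * t powr (real N - s - 1)) \<partial>lborel)
       = ennreal (-(\<alpha> powr (real N - s - 1 + 1)) / (real N - s - 1 + 1))"
    by (intro nn_integral_has_integral_lebesgue) auto
  also have "-(\<alpha> powr (real N - s - 1 + 1)) / (real N - s - 1 + 1) = \<alpha> powr (real N - s) / (s - real N)"
    using assms by (simp add: field_simps)
  finally show ?thesis by (simp add: eq)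
qed

lemma superpos:
  fixes c :: "'a::euclidean_space" and f :: "real \<Rightarrow> ennreal" and l :: real
  assumes l: "l > 0" and f: "f \<in> borel_measurable borel" and f0: "\<And>t. t < 0 \<Longrightarrow> f t = 0"
  shows "(\<integral>\<^sup>+x. (\<integral>\<^sup>+t. f t * indicator {l * norm (x - c)..} t \<partial>lborel) \<partial>(lborel::'a measure))
       = (\<integral>\<^sup>+t. f t * ennreal (unit_ball_vol (real DIM('a)) * (t / l) ^ DIM('a)) \<partial>lborel)"
proof -
  have ind: "indicator {l * norm (x - c)..} t = (indicator {p. l * norm (fst p - c) \<le> snd p} (x, t) :: ennreal)" for x t
    by (auto simp: indicator_def)
  have meas: "(\<lambda>(x::'a, t::real). f t * indicator {p. l * norm (fst p - c) \<le> snd p} (x, t)) \<in> borel_measurable (lborel \<Otimes>\<^sub>M lborel)"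
    using f by measurable
  have "(\<integral>\<^sup>+x. (\<integral>\<^sup>+t. f t * indicator {l * norm (x - c)..} t \<partial>lborel) \<partial>(lborel::'a measure))
      = (\<integral>\<^sup>+x. (\<integral>\<^sup>+t. f t * indicator {p. l * norm (fst p - c) \<le> snd p} (x, t) \<partial>lborel) \<partial>(lborel::'a measure))"
    by (simp add: ind)
  also have "\<dots> = (\<integral>\<^sup>+t. (\<integral>\<^sup>+x. f t * indicator {p. l * norm (fst p - c) \<le> snd p} (x, t) \<partial>(lborel::'a measure)) \<partial>lborel)"
    using lborel_pair.Fubini'[OF meas] by simp
  also have "\<dots> = (\<integral>\<^sup>+t. f t * ennreal (unit_ball_vol (real DIM('a)) * (t / l) ^ DIM('a)) \<partial>lborel)"
  proof (rule nn_integral_cong)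
    fix t :: real
    show "(\<integral>\<^sup>+x. f t * indicator {p. l * norm (fst p - c) \<le> snd p} (x, t) \<partial>(lborel::'a measure))
        = f t * ennreal (unit_ball_vol (real DIM('a)) * (t / l) ^ DIM('a))"
    proof (cases "t < 0")
      case True thus ?thesis by (simp add: f0)
    next
      case False
      have "indicator {p. l * norm (fst p - c) \<le> snd p} (x, t) = (indicator (cball c (t / l)) x :: ennreal)" for x
        using l by (auto simp: indicator_def dist_norm norm_minus_commute field_simps)
      hence "(\<integral>\<^sup>+x. f t * indicator {p. l * norm (fst p - c) \<le> snd p} (x, t) \<partial>(lborel::'a measure))
          = f t * emeasure lborel (cball c (t / l))"
        by (simp add: nn_integral_cmult_indicator)
      also have "emeasure lborel (cball c (t / l)) = ennreal (unit_ball_vol (real DIM('a)) * (t / l) ^ DIM('a))"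
        using False l by (intro emeasure_cball) auto
      finally show ?thesis .
    qed
  qed
  finally show ?thesis .
qed

lemma geoA:
  fixes l a b d :: real
  assumes "l > 0" "0 \<le> a" "0 \<le> b" "d \<le> a + b" "0 \<le> d" "l^2 * b^2 \<le> (1 + l^2*d^2)/4"
  shows "l / (1 + l^2*a^2) \<le> 4 * l / (1 + l^2*d^2)"
proof -
  have "d^2 \<le> (a+b)^2" using assms by (intro power_mono) auto
  also have "\<dots> \<le> 2*a^2 + 2*b^2" 
    using sum_squares_ge_zero[of "a-b" 0] by (simp add: power2_eq_square algebra_simps)
  finally have "l^2*d^2 \<le> l^2*(2*a^2+2*b^2)" by (intro mult_left_mono) auto
  hence le: "(1 + l^2*d^2) \<le> 4*(1+l^2*a^2)" using assms by (simp add: algebra_simps)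
  have p: "0 < 1 + l^2*a^2" "0 < 1 + l^2*d^2" by (auto intro: add_pos_nonneg)
  show ?thesis using le p assms(1)
    by (simp add: divide_simps)
qed

lemma geoB:
  fixes l m b d :: real
  assumes "l > 0" "m > 0" "0 \<le> b" "l^2 * b^2 > (1 + l^2*d^2)/4"
  shows "m / (1 + m^2*b^2) \<le> 5 * (l/m) * (l / (1 + l^2*b^2))"
proof -
  have "l^2*d^2 \<ge> 0" by simp
  moreover have "(1 + l^2*d^2)/4 = 1/4 + (l^2*d^2)/4" by simp
  ultimately have q: "l^2*b^2 \<ge> 1/4" using assms(4) by linarith
  hence bpos: "b > 0" using assms by (cases "b = 0") auto
  have p1: "m^2*b^2 > 0" using bpos assms by simp
  have p2: "1 + l^2*b^2 > 0" by (intro add_pos_nonneg) auto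
  have "m / (1 + m^2*b^2) \<le> m / (m^2*b^2)" using assms p1 by (intro divide_left_mono) auto
  also have "\<dots> = 1 / (m * b^2)" using assms by (simp add: power2_eq_square)
  also have "\<dots> = (1 + l^2*b^2) / (m * b^2 * (1 + l^2*b^2))"
    using assms bpos p2 by simp
  also have "\<dots> \<le> (5 * (l^2 * b^2)) / (m * b^2 * (1 + l^2*b^2))"
    using q assms bpos p2 by (intro divide_right_mono) (linarith, simp)
  also have "\<dots> = 5 * (l/m) * (l / (1 + l^2*b^2))"
    using assms bpos by (simp add: power2_eq_square)
  finally show ?thesis .
qed

lemma geoC:
  fixes l a b d :: real
  assumes "l > 0" "0 \<le> a" "a \<le> b" "d \<le> a + b" "0 \<le> d"
  shows "l / (1 + l^2*b^2) \<le> 4 * l / (1 + l^2*d^2)" "l / (1 + l^2*b^2) \<le> l / (1 + l^2*a^2)"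
proof -
  have "d \<le> 2*b" using assms by simp
  hence "d^2 \<le> (2*b)^2" using assms by (intro power_mono) auto
  hence "l^2*d^2 \<le> l^2*(4*b^2)" by (intro mult_left_mono) (auto simp: power_mult_distrib)
  hence le: "(1 + l^2*d^2) \<le> 4*(1+l^2*b^2)" by (simp add: algebra_simps)
  have p: "0 < 1 + l^2*b^2" "0 < 1 + l^2*d^2" "0 < 1 + l^2*a^2" by (auto intro: add_pos_nonneg)
  show "l / (1 + l^2*b^2) \<le> 4 * l / (1 + l^2*d^2)" using le p assms(1)
    by (simp add: divide_simps)
  have "a^2 \<le> b^2" using assms by (intro power_mono) auto
  hence "1 + l^2*a^2 \<le> 1 + l^2*b^2" by (simp add: mult_left_mono)
  thus "l / (1 + l^2*b^2) \<le> l / (1 + l^2*a^2)" using p assms(1)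
    by (intro divide_left_mono) auto
qed

lemma RA:
  fixes u k :: real
  assumes "0 \<le> u" "0 \<le> k"
  shows "(1/(1+u^2)) powr k \<le> (max u 1) powr (-2*k)"
proof -
  have M: "max u 1 > 0" by simp
  have "(max u 1)^2 \<le> 1 + u^2"
  proof (cases "u \<le> 1")
    case True thus ?thesis by (simp add: max_def)
  next
    case False thus ?thesis by (simp add: max_def)
  qed
  moreover have p: "1+u^2 > 0" by (intro add_pos_nonneg) auto
  ultimately have "1/(1+u^2) \<le> 1/(max u 1)^2" using M by (intro divide_left_mono) simp_all
  hence "(1/(1+u^2)) powr k \<le> (1/(max u 1)^2) powr k"
    using assms p by (intro powr_mono2) simp_all
  also have "1/(max u 1)^2 = (max u 1) powr (-2)"
    using M by (simp add: powr_minus powr_realpow divide_inverse)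
  also have "((max u 1) powr (-2)) powr k = (max u 1) powr (-2*k)"
    by (simp add: powr_powr)
  finally show ?thesis .
qed

lemma RA2:
  fixes M top n :: real
  assumes "1 \<le> M" "2*M \<le> top" "1 \<le> n"
  shows "M powr (-n) \<le> 2*(M powr (-n) - top powr (-n))"
proof -
  have h2: "2 powr (-n) \<le> 2 powr (-1)" using assms by (intro powr_mono) auto
  have "top powr (-n) \<le> (2*M) powr (-n)"
    using assms by (intro powr_mono2') auto
  also have "\<dots> = 2 powr (-n) * M powr (-n)" by (rule powr_mult)
  also have "\<dots> \<le> 2 powr (-1) * M powr (-n)" using h2 by (intro mult_right_mono) auto
  also have "2 powr (-1) = (1/2::real)" by (simp add: powr_minus)
  finally have "top powr (-n) \<le> M powr (-n) / 2" by simp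
  thus ?thesis by simp
qed


lemma Psi:
  fixes u D n :: real
  assumes "0 \<le> u" "1 \<le> D" "1 \<le> n"
  defines "b \<equiv> min 1 (4/D)"
  defines "T \<equiv> b powr (-1/2)"
  shows "((1/(1+u^2)) * min (4/D) (1/(1+u^2))) powr (n/2)
     \<le> (if u \<le> T then b powr (n/2) * (max u 1 powr (-n) - T powr (-n)) else 0) + max u T powr (-2*n)"
proof -
  have bpos: "b > 0" "b \<le> 1" using assms by (auto simp: b_def)
  have "b powr (1/2) \<le> 1" "b powr (1/2) > 0" using bpos by (auto intro: powr_le1)
  hence T1: "T \<ge> 1" unfolding T_def by (simp add: powr_minus one_le_inverse)
  have TnP: "T powr (-n) = b powr (n/2)" unfolding T_def using bpos by (simp add: powr_powr)
  have T2n: "T powr (-2*n) = b powr (n/2) * b powr (n/2)" unfolding T_def using bpos 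
    by (simp add: powr_powr powr_add[symmetric])
  have p: "1 + u^2 > 0" by (intro add_pos_nonneg) auto
  show ?thesis
  proof (cases "u \<le> T")
    case True
    have "1/(1+u^2) \<le> 1" using p by simp
    hence mb: "min (4/D) (1/(1+u^2)) \<le> b" unfolding b_def by linarith
    have "((1/(1+u^2)) * min (4/D) (1/(1+u^2))) powr (n/2) \<le> ((1/(1+u^2)) * b) powr (n/2)"
      using p assms mb by (intro powr_mono2 mult_left_mono) auto
    also have "\<dots> = (1/(1+u^2)) powr (n/2) * b powr (n/2)"
      by (rule powr_mult)
    also have "\<dots> \<le> max u 1 powr (-2*(n/2)) * b powr (n/2)"
      using assms bpos by (intro mult_right_mono RA) auto
    also have "\<dots> = (if u \<le> T then b powr (n/2) * (max u 1 powr (-n) - T powr (-n)) else 0) + max u T powr (-2*n)"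
      using True T2n TnP by (simp add: algebra_simps max_absorb2)
    finally show ?thesis .
  next
    case False
    hence u1: "u > 1" using T1 by simp
    have "u powr (-2) = 1/u^2" using u1 by (simp add: powr_minus powr_realpow divide_inverse)
    moreover have "1/(1+u^2) \<le> 1/u^2" using u1 p by (intro divide_left_mono) simp_all
    ultimately have le: "1/(1+u^2) \<le> u powr (-2)" by simp
    have "min (4/D) (1/(1+u^2)) \<le> u powr (-2)" using le by linarith
    hence "((1/(1+u^2)) * min (4/D) (1/(1+u^2))) powr (n/2) \<le> (u powr (-2) * u powr (-2)) powr (n/2)"
      using p assms le by (intro powr_mono2 mult_mono) auto
    also have "\<dots> = u powr (-2*n)" using u1 by (simp add: powr_add[symmetric] powr_powr)
    finally show ?thesis using False by (simp add: max_def)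
  qed
qed

lemma X1:
  fixes c :: "'a::euclidean_space" and l \<beta> :: real
  assumes l: "l > 0" and b: "1 \<le> \<beta>"
  shows "(\<integral>\<^sup>+x. (\<integral>\<^sup>+t. ennreal (t powr (-real DIM('a)-1) * indicator {1..\<beta>} t) * indicator {l * norm (x - c)..} t \<partial>lborel) \<partial>(lborel::'a measure))
       = ennreal (unit_ball_vol (real DIM('a)) / l ^ DIM('a) * ln \<beta>)"
proof -
  let ?K = "\<lambda>t::real. t powr (-real DIM('a)-1) * indicator {1..\<beta>} t"
  have meas: "(\<lambda>t. ennreal (?K t)) \<in> borel_measurable borel" by measurable
  have "(\<integral>\<^sup>+x. (\<integral>\<^sup>+t. ennreal (?K t) * indicator {l * norm (x - c)..} t \<partial>lborel) \<partial>(lborel::'a measure))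
      = (\<integral>\<^sup>+t. ennreal (?K t) * ennreal (unit_ball_vol (real DIM('a)) * (t / l) ^ DIM('a)) \<partial>lborel)"
    using l meas by (intro superpos) (auto simp: indicator_def)
  also have "\<dots> = (\<integral>\<^sup>+t. ennreal (unit_ball_vol (real DIM('a)) / l ^ DIM('a)) * ennreal (?K t * t ^ DIM('a)) \<partial>lborel)"
  proof (rule nn_integral_cong)
    fix t :: real
    show "ennreal (?K t) * ennreal (unit_ball_vol (real DIM('a)) * (t / l) ^ DIM('a))
        = ennreal (unit_ball_vol (real DIM('a)) / l ^ DIM('a)) * ennreal (?K t * t ^ DIM('a))"
    proof (cases "t \<in> {1..\<beta>}")
      case True
      hence t: "t > 0" by auto
      have "ennreal (?K t) * ennreal (unit_ball_vol (real DIM('a)) * (t / l) ^ DIM('a))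
          = ennreal (?K t * (unit_ball_vol (real DIM('a)) * (t / l) ^ DIM('a)))"
        using t l by (intro ennreal_mult'[symmetric]) auto
      also have "\<dots> = ennreal (unit_ball_vol (real DIM('a)) / l ^ DIM('a) * (?K t * t ^ DIM('a)))"
        by (simp add: power_divide field_simps)
      also have "\<dots> = ennreal (unit_ball_vol (real DIM('a)) / l ^ DIM('a)) * ennreal (?K t * t ^ DIM('a))"
        using t l by (intro ennreal_mult) auto
      finally show ?thesis .
    qed simp
  qed
  also have "\<dots> = ennreal (unit_ball_vol (real DIM('a)) / l ^ DIM('a)) * (\<integral>\<^sup>+t. ennreal (?K t * t ^ DIM('a)) \<partial>lborel)"
    by (intro nn_integral_cmult) measurable
  also have "(\<integral>\<^sup>+t. ennreal (?K t * t ^ DIM('a)) \<partial>lborel) = ennreal (ln \<beta> - ln 1)"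
    using K1b[of 1 \<beta> "DIM('a)"] b by simp
  also have "ennreal (unit_ball_vol (real DIM('a)) / l ^ DIM('a)) * ennreal (ln \<beta> - ln 1)
      = ennreal (unit_ball_vol (real DIM('a)) / l ^ DIM('a) * ln \<beta>)"
    using l b by (simp add: ennreal_mult[symmetric])
  finally show ?thesis .
qed

lemma X2:
  fixes c :: "'a::euclidean_space" and l \<alpha> :: real
  assumes l: "l > 0" and a: "0 < \<alpha>"
  shows "(\<integral>\<^sup>+x. (\<integral>\<^sup>+t. ennreal (t powr (-(2*real DIM('a))-1) * indicator {\<alpha>..} t) * indicator {l * norm (x - c)..} t \<partial>lborel) \<partial>(lborel::'a measure))
       = ennreal (unit_ball_vol (real DIM('a)) / l ^ DIM('a) * (\<alpha> powr (- real DIM('a)) / real DIM('a)))"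
proof -
  let ?K = "\<lambda>t::real. t powr (-(2*real DIM('a))-1) * indicator {\<alpha>..} t"
  have meas: "(\<lambda>t. ennreal (?K t)) \<in> borel_measurable borel" by measurable
  have "(\<integral>\<^sup>+x. (\<integral>\<^sup>+t. ennreal (?K t) * indicator {l * norm (x - c)..} t \<partial>lborel) \<partial>(lborel::'a measure))
      = (\<integral>\<^sup>+t. ennreal (?K t) * ennreal (unit_ball_vol (real DIM('a)) * (t / l) ^ DIM('a)) \<partial>lborel)"
    using l a meas by (intro superpos) (auto simp: indicator_def)
  also have "\<dots> = (\<integral>\<^sup>+t. ennreal (unit_ball_vol (real DIM('a)) / l ^ DIM('a)) * ennreal (?K t * t ^ DIM('a)) \<partial>lborel)"
  proof (rule nn_integral_cong)
    fix t :: real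
    show "ennreal (?K t) * ennreal (unit_ball_vol (real DIM('a)) * (t / l) ^ DIM('a))
        = ennreal (unit_ball_vol (real DIM('a)) / l ^ DIM('a)) * ennreal (?K t * t ^ DIM('a))"
    proof (cases "t \<in> {\<alpha>..}")
      case True
      hence t: "t > 0" using a by auto
      have "ennreal (?K t) * ennreal (unit_ball_vol (real DIM('a)) * (t / l) ^ DIM('a))
          = ennreal (?K t * (unit_ball_vol (real DIM('a)) * (t / l) ^ DIM('a)))"
        using t l by (intro ennreal_mult'[symmetric]) auto
      also have "\<dots> = ennreal (unit_ball_vol (real DIM('a)) / l ^ DIM('a) * (?K t * t ^ DIM('a)))"
        by (simp add: power_divide field_simps)
      also have "\<dots> = ennreal (unit_ball_vol (real DIM('a)) / l ^ DIM('a)) * ennreal (?K t * t ^ DIM('a))"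
        using t l by (intro ennreal_mult) auto
      finally show ?thesis .
    qed simp
  qed
  also have "\<dots> = ennreal (unit_ball_vol (real DIM('a)) / l ^ DIM('a)) * (\<integral>\<^sup>+t. ennreal (?K t * t ^ DIM('a)) \<partial>lborel)"
    by (intro nn_integral_cmult) measurable
  also have "(\<integral>\<^sup>+t. ennreal (?K t * t ^ DIM('a)) \<partial>lborel) = ennreal (\<alpha> powr (real DIM('a) - 2*real DIM('a)) / (2*real DIM('a) - real DIM('a)))"
    using K2b[where \<alpha>=\<alpha> and s="2*real DIM('a)" and N="DIM('a)"] a by simp
  also have "\<alpha> powr (real DIM('a) - 2*real DIM('a)) / (2*real DIM('a) - real DIM('a)) = \<alpha> powr (- real DIM('a)) / real DIM('a)"
    by simp
  also have "ennreal (unit_ball_vol (real DIM('a)) / l ^ DIM('a)) * ennreal (\<alpha> powr (- real DIM('a)) / real DIM('a))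
      = ennreal (unit_ball_vol (real DIM('a)) / l ^ DIM('a) * (\<alpha> powr (- real DIM('a)) / real DIM('a)))"
    using l a by (simp add: ennreal_mult[symmetric])
  finally show ?thesis .
qed

definition ww :: "'a::euclidean_space \<Rightarrow> real \<Rightarrow> 'a \<Rightarrow> real" where
  "ww z l x = l / (1 + l^2 * (norm (x - z))^2)"

lemma ww_pos: "l > 0 \<Longrightarrow> ww z l x > 0"
  unfolding ww_def by (intro divide_pos_pos add_pos_nonneg) auto

lemma ww_alt: "l > 0 \<Longrightarrow> ww z l x = l * (1 / (1 + (l * norm (x - z))^2))"
  unfolding ww_def by (simp add: power_mult_distrib)

lemma pointwise:
  fixes zi zj x :: "'a::euclidean_space" and li lj n :: real
  assumes li: "li > 0" and lij: "li \<le> lj" and n: "1 \<le> n"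
  assumes D_def: "D = 1 + li^2 * (norm (zi - zj))^2"
  assumes h_def: "h = li / lj"
  assumes U_def: "U = sqrt D / (2*h)"
  assumes tp_def: "tp = max (2*U) 2"
  assumes b_def: "b = min 1 (4/D)"
  assumes T_def: "T = b powr (-1/2)"
  assumes cA_def: "cA = (4*li/D) powr (n/2) * lj powr (n/2)"
  assumes cB_def: "cB = (5*h) powr (n/2)"
  assumes g1_def: "g1 = (\<lambda>u::real. if u \<le> T then (max u 1 powr (-n) - T powr (-n)) / n else 0)"
  assumes g2_def: "g2 = (\<lambda>u::real. max u T powr (-(2*n)) / (2*n))"
  shows "(lj * norm (x - zj) \<le> tp \<and>
          (ww zi li x * ww zj lj x) powr (n/2) \<le> 2*n*cA * ((max (lj * norm (x - zj)) 1 powr (-n) - tp powr (-n)) / n))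
       \<or> (ww zi li x * ww zj lj x) powr (n/2) \<le>
          cB * li powr n * ((n * b powr (n/2) * g1 (li * norm (x - zi)) + 2*n * g2 (li * norm (x - zi)))
                           + (n * b powr (n/2) * g1 (li * norm (x - zj)) + 2*n * g2 (li * norm (x - zj))))"
proof -
  define ri where "ri = norm (x - zi)"
  define rj where "rj = norm (x - zj)"
  define d where "d = norm (zi - zj)"
  have lj: "lj > 0" using li lij by simp
  have tri: "d \<le> ri + rj" unfolding d_def ri_def rj_def
    using norm_triangle_ineq4[of "x - zj" "x - zi"] by (simp add: norm_minus_commute)
  have D1: "D \<ge> 1" unfolding D_def by simp
  have d0: "d \<ge> 0" "ri \<ge> 0" "rj \<ge> 0" unfolding d_def ri_def rj_def by auto
  have hpos: "h > 0" "h \<le> 1" unfolding h_def using li lij by auto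
  have wi: "ww zi li x = li / (1 + li^2 * ri^2)" unfolding ww_def ri_def ..
  have wj: "ww zj lj x = lj / (1 + lj^2 * rj^2)" unfolding ww_def rj_def ..
  have wipos: "ww zi li x > 0" "ww zj lj x > 0" using li lj by (auto intro: ww_pos)
  let ?k = "n/2"
  have Dd: "D = 1 + li^2*d^2" unfolding D_def d_def ..
  have bpos: "b > 0" "b \<le> 1" using D1 by (auto simp: b_def)
  have "b powr (1/2) \<le> 1" "b powr (1/2) > 0" using bpos by (auto intro: powr_le1)
  hence T1: "T \<ge> 1" unfolding T_def by (simp add: powr_minus one_le_inverse)
  show ?thesis
  proof (cases "li^2 * rj^2 \<le> D/4")
    case True
    have wib: "ww zi li x \<le> 4*li/D"
      unfolding wi Dd using geoA[of li ri rj d] True tri li by (auto simp: ri_def rj_def d_def Dd)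
    define u where "u = lj * rj"
    have u0: "u \<ge> 0" unfolding u_def rj_def using lj by simp
    have uU: "u \<le> U"
    proof -
      have "(li*rj)^2 \<le> (sqrt D / 2)^2" using True D1 by (simp add: power_mult_distrib power_divide)
      moreover have "0 \<le> sqrt D / 2" using D1 by simp
      ultimately have "li*rj \<le> sqrt D / 2" by (rule power2_le_imp_le)
      hence "lj*(li*rj) \<le> lj * (sqrt D / 2)" using lj by (intro mult_left_mono) simp_all
      thus ?thesis unfolding u_def U_def h_def using li lj by (simp add: field_simps)
    qed
    have Mtp: "2 * max u 1 \<le> tp" unfolding tp_def using uU by auto
    have wjeq: "ww zj lj x = lj * (1/(1+u^2))" unfolding wj u_def using lj by (simp add: power_mult_distrib)
    have "(ww zi li x * ww zj lj x) powr ?k \<le> (4*li/D * ww zj lj x) powr ?k"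
      using wib wipos n by (intro powr_mono2 mult_right_mono) auto
    also have "\<dots> = (4*li/D) powr ?k * lj powr ?k * (1/(1+u^2)) powr ?k"
      unfolding wjeq by (simp only: powr_mult mult.assoc)
    also have "\<dots> \<le> (4*li/D) powr ?k * lj powr ?k * (max u 1 powr (-2*?k))"
      using u0 n by (intro mult_left_mono RA) auto
    also have "(max u 1 powr (-2*?k)) = max u 1 powr (-n)" by simp
    also have "(4*li/D) powr ?k * lj powr ?k * max u 1 powr (-n) \<le> (4*li/D) powr ?k * lj powr ?k * (2*(max u 1 powr (-n) - tp powr (-n)))"
      using Mtp n by (intro mult_left_mono RA2) auto
    also have "\<dots> = 2*n*cA * ((max u 1 powr (-n) - tp powr (-n)) / n)"
      unfolding cA_def using n by simp
    finally have "(ww zi li x * ww zj lj x) powr ?k \<le> 2*n*cA * ((max u 1 powr (-n) - tp powr (-n)) / n)" .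
    moreover have "u \<le> tp" using Mtp by simp
    ultimately show ?thesis unfolding u_def rj_def by simp
  next
    case False
    define what where "what = li / (1 + li^2 * rj^2)"
    have wjb: "ww zj lj x \<le> 5*h*what"
      unfolding wj what_def h_def using geoB[of li lj rj d] False li lj by (auto simp: rj_def Dd)
    have whpos: "what > 0" unfolding what_def using li by (intro divide_pos_pos add_pos_nonneg) auto
    have step1: "(ww zi li x * ww zj lj x) powr ?k \<le> cB * (ww zi li x * what) powr ?k"
    proof -
      have "(ww zi li x * ww zj lj x) powr ?k \<le> (ww zi li x * (5*h*what)) powr ?k"
        using wjb wipos n by (intro powr_mono2 mult_left_mono) auto
      also have "\<dots> = cB * (ww zi li x * what) powr ?k"
        unfolding cB_def using hpos whpos wipos by (simp add: powr_mult[symmetric] mult_ac)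
      finally show ?thesis .
    qed
    have Phi: "(w * min (4*li/D) w) powr ?k \<le> li powr n * (n * b powr ?k * g1 (li*r) + 2*n * g2 (li*r))"
      if "w = li / (1 + li^2 * r^2)" "r \<ge> 0" for w r
    proof -
      have e1: "w = li * (1/(1+(li*r)^2))" using that li by (simp add: power_mult_distrib)
      have e2: "min (4*li/D) w = li * min (4/D) (1/(1+(li*r)^2))"
        unfolding e1 using li by (simp add: min_mult_distrib_left ac_simps)
      have p: "1/(1+(li*r)^2) > 0" by (intro divide_pos_pos add_pos_nonneg) auto
      have "(w * min (4*li/D) w) powr ?k = (li*li) powr ?k * ((1/(1+(li*r)^2)) * min (4/D) (1/(1+(li*r)^2))) powr ?k"
        unfolding e2 by (simp only: e1 mult_ac) (simp only: powr_mult mult.assoc)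
      also have "(li*li) powr ?k = li powr n" by (simp only: powr_mult powr_add[symmetric]) simp
      also have "((1/(1+(li*r)^2)) * min (4/D) (1/(1+(li*r)^2))) powr ?k
          \<le> (if li*r \<le> T then b powr ?k * (max (li*r) 1 powr (-n) - T powr (-n)) else 0) + max (li*r) T powr (-2*n)"
        unfolding b_def T_def using Psi[of "li*r" D n] that li D1 n by auto
      also have "\<dots> = n * b powr ?k * g1 (li*r) + 2*n * g2 (li*r)"
        unfolding g1_def g2_def using n by (auto simp: field_simps)
      finally show ?thesis using li by (simp add: mult_left_mono)
    qed
    have g1nn: "g1 u \<ge> 0" for u
    proof -
      have "u \<le> T \<Longrightarrow> T powr (-n) \<le> max u 1 powr (-n)"
        using n T1 by (intro powr_mono2') auto
      thus ?thesis unfolding g1_def using n by auto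
    qed
    have g2nn: "g2 u \<ge> 0" for u unfolding g2_def using n by auto
    have bk: "b powr ?k \<ge> 0" by simp
    have termnn: "0 \<le> li powr n * (n * b powr ?k * g1 u + 2*n * g2 u)" for u
      using g1nn g2nn n bk by (intro mult_nonneg_nonneg add_nonneg_nonneg) auto
    have step2: "(ww zi li x * what) powr ?k \<le> li powr n * ((n * b powr ?k * g1 (li*ri) + 2*n * g2 (li*ri))
                           + (n * b powr ?k * g1 (li*rj) + 2*n * g2 (li*rj)))"
    proof (cases "ri \<le> rj")
      case True
      have m: "what \<le> min (4*li/D) (ww zi li x)"
        using geoC[of li ri rj d] True tri li d0 unfolding what_def wi Dd by simp
      have "(ww zi li x * what) powr ?k \<le> (ww zi li x * min (4*li/D) (ww zi li x)) powr ?k"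
        using m wipos whpos n by (intro powr_mono2 mult_left_mono) auto
      also have "\<dots> \<le> li powr n * (n * b powr ?k * g1 (li*ri) + 2*n * g2 (li*ri))"
        by (rule Phi) (auto simp: wi ri_def)
      finally show ?thesis using termnn[of "li*rj"] by (simp add: distrib_left)
    next
      case False
      have m: "ww zi li x \<le> min (4*li/D) what"
        using geoC[of li rj ri d] False tri li d0 unfolding what_def wi Dd by simp
      have "(ww zi li x * what) powr ?k \<le> (what * min (4*li/D) what) powr ?k"
        using m wipos whpos n by (intro powr_mono2) (auto simp: mult.commute[of _ what] intro: mult_left_mono)
      also have "\<dots> \<le> li powr n * (n * b powr ?k * g1 (li*rj) + 2*n * g2 (li*rj))"
        by (rule Phi) (auto simp: what_def rj_def)
      finally show ?thesis using termnn[of "li*ri"] by (simp add: distrib_left)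
    qed
    have "cB \<ge> 0" unfolding cB_def by simp
    hence "(ww zi li x * ww zj lj x) powr ?k \<le> cB * (li powr n * ((n * b powr ?k * g1 (li*ri) + 2*n * g2 (li*ri))
                           + (n * b powr ?k * g1 (li*rj) + 2*n * g2 (li*rj))))"
      using step1 step2 by (meson mult_left_mono order_trans)
    thus ?thesis unfolding ri_def rj_def by (simp add: mult.assoc)
  qed
qed

lemma scalar_bound:
  fixes li lj n dd \<omega> :: real
  assumes li: "li > 0" and lij: "li \<le> lj" and n: "1 \<le> n" and om: "\<omega> \<ge> 0" and dd: "dd \<ge> 0"
  assumes D_def: "D = 1 + li^2 * dd^2"
  assumes h_def: "h = li / lj"
  assumes U_def: "U = sqrt D / (2*h)"
  assumes tp_def: "tp = max (2*U) 2"
  assumes b_def: "b = min 1 (4/D)"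
  assumes T_def: "T = b powr (-1/2)"
  assumes cA_def: "cA = (4*li/D) powr (n/2) * lj powr (n/2)"
  assumes cB_def: "cB = (5*h) powr (n/2)"
  assumes eps_def: "eps = 1 / (li/lj + lj/li + li*lj*dd^2)"
  shows "2*n*cA*(\<omega>/lj powr n * ln tp) + 2*(cB*li powr n*n*b powr (n/2)) * (\<omega>/li powr n * ln T)
          + 2*(cB*li powr n*(2*n))*(\<omega>/li powr n*(T powr (-n)/n))
       \<le> \<omega>*(3*n+4)*40 powr (n/2)*eps powr (n/2)*(1+ln (1/eps))"
proof -
  let ?k = "n/2"
  define L where "L = ln (1/eps)"
  define q where "q = h / D"
  have lj: "lj > 0" using li lij by simp
  have D1: "D \<ge> 1" unfolding D_def by simp
  have hpos: "h > 0" "h \<le> 1" unfolding h_def using li lij by auto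
  have qpos: "q > 0" unfolding q_def using hpos D1 by simp
  have epsD: "li/lj + lj/li + li*lj*dd^2 = h + D/h"
    unfolding h_def D_def using li lj by (simp add: field_simps power2_eq_square)
  have epos: "eps > 0" unfolding eps_def epsD using hpos D1 by (simp add: add_pos_pos)
  have Dh_eps: "D/h \<le> 1/eps" unfolding eps_def epsD using hpos by simp
  have q_eps: "q \<le> 2*eps"
  proof -
    have "h*h \<le> 1*D" using hpos D1 by (intro mult_mono) auto
    hence "h \<le> D/h" using hpos by (simp add: field_simps)
    hence "h + D/h \<le> 2*(D/h)" by simp
    hence "1/(2*(D/h)) \<le> 1/(h + D/h)" using hpos D1 by (intro divide_left_mono) (auto intro: add_pos_pos)
    thus ?thesis unfolding q_def eps_def epsD using hpos D1 by (simp add: field_simps)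
  qed
  have Lnn: "L \<ge> 0"
  proof -
    have "1 \<le> D/h" using hpos D1 by (simp add: field_simps)
    hence "1 \<le> 1/eps" using Dh_eps by linarith
    thus ?thesis unfolding L_def by simp
  qed
  have lnD: "ln D \<le> L"
  proof -
    have "D \<le> D/h" using hpos D1 by (simp add: field_simps mult_left_le)
    hence "D \<le> 1/eps" using Dh_eps by linarith
    thus ?thesis unfolding L_def using D1 epos by (subst ln_le_cancel_iff) auto
  qed
  have lntp: "ln tp \<le> 1 + L"
  proof -
    have sD: "1 \<le> sqrt D" "sqrt D \<le> D" using D1 by (auto simp: real_sqrt_le_iff' power2_eq_square intro: mult_left_mono[of 1 D D, simplified])
    have "h \<le> sqrt D" using sD hpos by linarith
    hence "1 \<le> sqrt D / h" using hpos by (simp add: field_simps)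
    hence "tp \<le> 2 * (sqrt D / h)" unfolding tp_def U_def using hpos D1 by (auto simp: field_simps)
    also have "\<dots> \<le> 2 * (D/h)" using sD hpos by (intro mult_left_mono divide_right_mono) auto
    also have "\<dots> \<le> 2 * (1/eps)" using Dh_eps by simp
    finally have tp: "tp \<le> 2 * (1/eps)" .
    have tp0: "tp > 0" unfolding tp_def by simp
    have "ln tp \<le> ln (2 * (1/eps))" using tp tp0 epos by (subst ln_le_cancel_iff) auto
    also have "\<dots> = ln 2 + L" unfolding L_def using epos by (subst ln_mult) auto
    also have "ln (2::real) \<le> 1" using ln_le_minus_one[of 2] by simp
    finally show ?thesis by simp
  qed
  have bpos: "b > 0" "b \<le> 1" using D1 by (auto simp: b_def)
  have bk: "b powr ?k \<le> (4/D) powr ?k" using bpos n D1 unfolding b_def by (intro powr_mono2) auto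
  have lnT: "ln T = - (ln b) / 2" unfolding T_def using bpos by (simp add: ln_powr)
  have blnT: "b powr ?k * ln T \<le> (4/D) powr ?k * (L/2)"
  proof (cases "b = 1")
    case True
    thus ?thesis using lnT Lnn D1 by simp
  next
    case False
    hence bD: "b = 4/D" unfolding b_def by (auto simp: min_def split: if_splits)
    have "ln T = ln (D/4) / 2" unfolding lnT bD using D1 by (simp add: ln_div)
    also have "\<dots> \<le> L/2"
    proof -
      have "ln (D/4) \<le> ln D" using D1 by (subst ln_le_cancel_iff) auto
      thus ?thesis using lnD by simp
    qed
    finally have "ln T \<le> L/2" .
    thus ?thesis unfolding bD using D1 by (intro mult_left_mono) auto
  qed
  have TnB: "T powr (-n) = b powr ?k" unfolding T_def using bpos by (simp add: powr_powr)
  have lipn: "li powr n > 0" "lj powr n > 0" using li lj by auto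
  have ljn: "lj powr n = lj powr ?k * lj powr ?k" by (simp add: powr_add[symmetric])
  have cAq: "cA / lj powr n = (4*q) powr ?k"
  proof -
    have "cA / lj powr n = (4*li/D) powr ?k / lj powr ?k"
      unfolding cA_def ljn using lj by simp
    also have "\<dots> = (4*li/D / lj) powr ?k" using li lj D1 by (simp add: powr_divide powr_mult)
    also have "4*li/D / lj = 4*q" unfolding q_def h_def by simp
    finally show ?thesis .
  qed
  have q4: "(4*q) powr ?k \<le> 40 powr ?k * eps powr ?k"
  proof -
    have "(4*q) powr ?k \<le> (40*eps) powr ?k" using q_eps qpos n by (intro powr_mono2) auto
    thus ?thesis by (simp add: powr_mult)
  qed
  have cBb: "cB * (4/D) powr ?k \<le> 40 powr ?k * eps powr ?k"
  proof -
    have "cB * (4/D) powr ?k = (20*q) powr ?k" unfolding cB_def q_def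
      using hpos D1 by (simp add: powr_mult[symmetric])
    also have "\<dots> \<le> (40*eps) powr ?k" using q_eps qpos n by (intro powr_mono2) auto
    finally show ?thesis by (simp add: powr_mult)
  qed
  have cBnn: "cB \<ge> 0" unfolding cB_def by simp
  define E where "E = 40 powr ?k * eps powr ?k"
  have Enn: "E \<ge> 0" unfolding E_def by simp
  have tp2: "ln tp \<ge> 0" unfolding tp_def by simp
  have t1: "2*n*cA*(\<omega>/lj powr n * ln tp) \<le> 2*n*\<omega>*E*(1+L)"
  proof -
    have "2*n*cA*(\<omega>/lj powr n * ln tp) = 2*n*\<omega>*((cA / lj powr n) * ln tp)" by (simp add: field_simps)
    also have "\<dots> = 2*n*\<omega>*((4*q) powr ?k * ln tp)" by (simp add: cAq)
    also have "(4*q) powr ?k * ln tp \<le> E * (1+L)"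
      using q4 lntp tp2 Enn unfolding E_def by (intro mult_mono) auto
    hence "2*n*\<omega>*((4*q) powr ?k * ln tp) \<le> 2*n*\<omega>*(E * (1+L))"
      using n om by (intro mult_left_mono) auto
    finally show ?thesis by (simp add: mult.assoc)
  qed
  have t2: "2*(cB*li powr n*n*b powr (n/2)) * (\<omega>/li powr n * ln T) \<le> n*\<omega>*E*L"
  proof -
    have "2*(cB*li powr n*n*b powr (n/2)) * (\<omega>/li powr n * ln T) = 2*n*\<omega>*cB*(b powr ?k * ln T)"
      using lipn by (simp add: field_simps)
    also have "\<dots> \<le> 2*n*\<omega>*cB*((4/D) powr ?k * (L/2))"
      using blnT n om cBnn by (intro mult_left_mono) auto
    also have "\<dots> = n*\<omega>*(cB*(4/D) powr ?k)*L" by (simp add: field_simps)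
    also have "\<dots> \<le> n*\<omega>*E*L"
      using cBb n om Lnn unfolding E_def by (intro mult_right_mono mult_left_mono) auto
    finally show ?thesis .
  qed
  have t3: "2*(cB*li powr n*(2*n))*(\<omega>/li powr n*(T powr (-n)/n)) \<le> 4*\<omega>*E"
  proof -
    have "2*(cB*li powr n*(2*n))*(\<omega>/li powr n*(T powr (-n)/n)) = 4*\<omega>*(cB*b powr ?k)"
      using lipn n by (simp add: field_simps TnB)
    also have "4*\<omega>*(cB*b powr ?k) \<le> 4*\<omega>*(cB*(4/D) powr ?k)"
      using bk cBnn om by (intro mult_left_mono) auto
    also have "\<dots> \<le> 4*\<omega>*E" using cBb om unfolding E_def by (intro mult_left_mono) auto
    finally show ?thesis .
  qed
  have "2*n*\<omega>*E*(1+L) + n*\<omega>*E*L + 4*\<omega>*E \<le> \<omega>*(3*n+4)*E*(1+L)"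
  proof -
    have "0 \<le> \<omega>*E" using om Enn by simp
    hence "\<omega>*E*(n*L) \<le> \<omega>*E*(n*(1+L))" "\<omega>*E*4 \<le> \<omega>*E*(4*(1+L))"
      using Lnn n by (intro mult_left_mono; simp)+
    thus ?thesis by (simp add: algebra_simps)
  qed
  thus ?thesis using t1 t2 t3 unfolding E_def L_def by (simp add: mult.assoc)
qed

lemma F_meas:
  fixes c :: "'a::euclidean_space" and K :: "real \<Rightarrow> real"
  assumes "K \<in> borel_measurable borel"
  shows "(\<lambda>x. \<integral>\<^sup>+t. ennreal (K t) * indicator {l * norm (x - c)..} t \<partial>lborel) \<in> borel_measurable (lborel::'a measure)"
proof -
  have ind: "indicator {l * norm (x - c)..} t = (indicator {p. l * norm (fst p - c) \<le> snd p} (x, t) :: ennreal)" for x t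
    by (auto simp: indicator_def)
  have "(\<lambda>(x::'a, t::real). ennreal (K t) * indicator {p. l * norm (fst p - c) \<le> snd p} (x, t)) \<in> borel_measurable (lborel \<Otimes>\<^sub>M lborel)"
    using assms by measurable
  hence "(\<lambda>x. \<integral>\<^sup>+t. ennreal (K t) * indicator {p. l * norm (fst p - c) \<le> snd p} (x, t) \<partial>lborel) \<in> borel_measurable (lborel::'a measure)"
    by (rule lborel.borel_measurable_nn_integral)
  thus ?thesis by (simp add: ind)
qed


lemma pair_int:
  fixes zi zj :: "'a::euclidean_space" and li lj :: real
  assumes li: "li > 0" and lij: "li \<le> lj"
  defines "eps \<equiv> 1 / (li/lj + lj/li + li*lj*(norm (zi - zj))^2)"
  shows "(\<integral>\<^sup>+x. ennreal ((ww zi li x * ww zj lj x) powr (real DIM('a)/2)) \<partial>lborel)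
     \<le> ennreal (unit_ball_vol (real DIM('a)) * (3*real DIM('a)+4) * 40 powr (real DIM('a)/2) * eps powr (real DIM('a)/2) * (1 + ln (1/eps)))"
proof -
  define n where "n = real DIM('a)"
  define \<omega> where "\<omega> = unit_ball_vol (real DIM('a))"
  define D where "D = 1 + li^2 * (norm (zi - zj))^2"
  define h where "h = li / lj"
  define U where "U = sqrt D / (2*h)"
  define tp where "tp = max (2*U) 2"
  define b where "b = min 1 (4/D)"
  define T where "T = b powr (-1/2)"
  define cA where "cA = (4*li/D) powr (n/2) * lj powr (n/2)"
  define cB where "cB = (5*h) powr (n/2)"
  define g1 where "g1 = (\<lambda>u::real. if u \<le> T then (max u 1 powr (-n) - T powr (-n)) / n else 0)"
  define g2 where "g2 = (\<lambda>u::real. max u T powr (-(2*n)) / (2*n))"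
  define KA where "KA = (\<lambda>t::real. t powr (-n-1) * indicator {1..tp} t)"
  define K1 where "K1 = (\<lambda>t::real. t powr (-n-1) * indicator {1..T} t)"
  define K2 where "K2 = (\<lambda>t::real. t powr (-(2*n)-1) * indicator {T..} t)"
  define FA where "FA = (\<lambda>x::'a. \<integral>\<^sup>+t. ennreal (KA t) * indicator {lj * norm (x - zj)..} t \<partial>lborel)"
  define F1 where "F1 = (\<lambda>c x::'a. \<integral>\<^sup>+t. ennreal (K1 t) * indicator {li * norm (x - c)..} t \<partial>lborel)"
  define F2 where "F2 = (\<lambda>c x::'a. \<integral>\<^sup>+t. ennreal (K2 t) * indicator {li * norm (x - c)..} t \<partial>lborel)"
  have lj: "lj > 0" using li lij by simp
  have n1: "n \<ge> 1" unfolding n_def by simp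
  have D1: "D \<ge> 1" unfolding D_def by simp
  have bpos: "b > 0" "b \<le> 1" using D1 by (auto simp: b_def)
  have "b powr (1/2) \<le> 1" "b powr (1/2) > 0" using bpos by (auto intro: powr_le1)
  hence T1: "T \<ge> 1" unfolding T_def by (simp add: powr_minus one_le_inverse)
  have tp2: "tp \<ge> 2" unfolding tp_def by simp
  have om: "\<omega> \<ge> 0" unfolding \<omega>_def by simp
  have FAval: "FA x = ennreal ((max (lj * norm (x - zj)) 1 powr (-n) - tp powr (-n)) / n)"
    if "lj * norm (x - zj) \<le> tp" for x
    unfolding FA_def KA_def using K1a[of n 1 tp "lj * norm (x - zj)"] that n1 tp2 by simp
  have F1val: "F1 c x = ennreal (g1 (li * norm (x - c)))" for c x
  proof (cases "li * norm (x - c) \<le> T")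
    case True thus ?thesis unfolding F1_def K1_def g1_def using K1a[of n 1 T "li * norm (x - c)"] n1 T1 by simp
  next
    case False
    hence z: "ennreal (K1 t) * indicator {li * norm (x - c)..} t = 0" for t
      unfolding K1_def by (auto simp: indicator_def)
    have "F1 c x = (\<integral>\<^sup>+(t::real). 0 \<partial>lborel)" unfolding F1_def by (rule nn_integral_cong) (rule z)
    thus ?thesis unfolding g1_def using False by simp
  qed
  have F2val: "F2 c x = ennreal (g2 (li * norm (x - c)))" for c x
    unfolding F2_def K2_def g2_def using K2a[of "2*n" T "li * norm (x - c)"] n1 T1 by simp
  define c0 where "c0 = 2*n*cA"
  define c1 where "c1 = cB * li powr n * (n * b powr (n/2))"
  define c2 where "c2 = cB * li powr n * (2*n)"
  have cnn: "c0 \<ge> 0" "c1 \<ge> 0" "c2 \<ge> 0" unfolding c0_def c1_def c2_def cA_def cB_def using n1 by auto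
  have pw: "ennreal ((ww zi li x * ww zj lj x) powr (n/2))
      \<le> ennreal c0 * FA x + ennreal c1 * F1 zi x + ennreal c2 * F2 zi x + ennreal c1 * F1 zj x + ennreal c2 * F2 zj x" for x
  proof -
    have g1nn: "g1 u \<ge> 0" for u
    proof -
      have "u \<le> T \<Longrightarrow> T powr (-n) \<le> max u 1 powr (-n)"
        using n1 T1 by (intro powr_mono2') auto
      thus ?thesis unfolding g1_def using n1 by auto
    qed
    have g2nn: "g2 u \<ge> 0" for u unfolding g2_def using n1 by auto
    note P = pointwise[OF li lij n1 D_def h_def U_def tp_def b_def T_def cA_def cB_def g1_def g2_def, of x]
    consider
      (A) "lj * norm (x - zj) \<le> tp" "(ww zi li x * ww zj lj x) powr (n/2) \<le> c0 * ((max (lj * norm (x - zj)) 1 powr (-n) - tp powr (-n)) / n)"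
    | (B) "(ww zi li x * ww zj lj x) powr (n/2) \<le> c1 * g1 (li * norm (x - zi)) + c2 * g2 (li * norm (x - zi)) + c1 * g1 (li * norm (x - zj)) + c2 * g2 (li * norm (x - zj))"
    proof -
      have "cB * li powr n * ((n * b powr (n/2) * g1 (li * norm (x - zi)) + 2*n * g2 (li * norm (x - zi)))
                           + (n * b powr (n/2) * g1 (li * norm (x - zj)) + 2*n * g2 (li * norm (x - zj))))
          = c1 * g1 (li * norm (x - zi)) + c2 * g2 (li * norm (x - zi)) + c1 * g1 (li * norm (x - zj)) + c2 * g2 (li * norm (x - zj))"
        unfolding c1_def c2_def by (simp add: algebra_simps)
      thus ?thesis using P that unfolding c0_def by auto
    qed
    thus ?thesis
    proof cases
      case A
      have "ennreal ((ww zi li x * ww zj lj x) powr (n/2)) \<le> ennreal (c0 * ((max (lj * norm (x - zj)) 1 powr (-n) - tp powr (-n)) / n))"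
        using A(2) by (rule ennreal_leI)
      also have "\<dots> = ennreal c0 * FA x"
      proof -
        have "max (lj * norm (x - zj)) 1 \<le> tp" using A(1) tp2 by simp
        hence "tp powr (-n) \<le> max (lj * norm (x - zj)) 1 powr (-n)" using n1 by (intro powr_mono2') auto
        hence v: "0 \<le> (max (lj * norm (x - zj)) 1 powr (-n) - tp powr (-n)) / n" using n1 by simp
        show ?thesis by (subst FAval[OF A(1)]) (rule ennreal_mult[OF cnn(1) v])
      qed
      also have "\<dots> \<le> ennreal c0 * FA x + ennreal c1 * F1 zi x + ennreal c2 * F2 zi x + ennreal c1 * F1 zj x + ennreal c2 * F2 zj x"
        by (simp add: add.assoc)
      finally show ?thesis .
    next
      case B
      have "ennreal ((ww zi li x * ww zj lj x) powr (n/2)) \<le> ennreal (c1 * g1 (li * norm (x - zi)) + c2 * g2 (li * norm (x - zi)) + c1 * g1 (li * norm (x - zj)) + c2 * g2 (li * norm (x - zj)))"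
        using B by (rule ennreal_leI)
      also have "\<dots> = ennreal c1 * F1 zi x + ennreal c2 * F2 zi x + ennreal c1 * F1 zj x + ennreal c2 * F2 zj x"
      proof -
        define a1 where "a1 = g1 (li * norm (x - zi))"
        define a2 where "a2 = g2 (li * norm (x - zi))"
        define a3 where "a3 = g1 (li * norm (x - zj))"
        define a4 where "a4 = g2 (li * norm (x - zj))"
        have nn: "0 \<le> c1*a1" "0 \<le> c2*a2" "0 \<le> c1*a3" "0 \<le> c2*a4" "a1 \<ge> 0" "a2 \<ge> 0" "a3 \<ge> 0" "a4 \<ge> 0"
          using cnn g1nn g2nn unfolding a1_def a2_def a3_def a4_def by auto
        have "ennreal (c1*a1 + c2*a2 + c1*a3 + c2*a4) = ennreal (c1*a1) + ennreal (c2*a2) + ennreal (c1*a3) + ennreal (c2*a4)"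
          using nn by (simp add: add_nonneg_nonneg)
        also have "\<dots> = ennreal c1 * ennreal a1 + ennreal c2 * ennreal a2 + ennreal c1 * ennreal a3 + ennreal c2 * ennreal a4"
          using nn cnn by (simp add: ennreal_mult)
        finally show ?thesis unfolding a1_def a2_def a3_def a4_def F1val F2val .
      qed
      also have "\<dots> \<le> ennreal c0 * FA x + ennreal c1 * F1 zi x + ennreal c2 * F2 zi x + ennreal c1 * F1 zj x + ennreal c2 * F2 zj x"
        by (simp add: add.assoc add_increasing)
      finally show ?thesis .
    qed
  qed
  have KAm: "KA \<in> borel_measurable borel" unfolding KA_def by measurable
  have K1m: "K1 \<in> borel_measurable borel" unfolding K1_def by measurable
  have K2m: "K2 \<in> borel_measurable borel" unfolding K2_def by measurable
  have FAm[measurable]: "FA \<in> borel_measurable lborel" unfolding FA_def using F_meas[OF KAm] by simp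
  have F1m[measurable]: "F1 c \<in> borel_measurable lborel" for c unfolding F1_def using F_meas[OF K1m] by simp
  have F2m[measurable]: "F2 c \<in> borel_measurable lborel" for c unfolding F2_def using F_meas[OF K2m] by simp
  have IA: "(\<integral>\<^sup>+x. FA x \<partial>lborel) = ennreal (\<omega> / lj ^ DIM('a) * ln tp)"
    unfolding FA_def KA_def n_def \<omega>_def using X1[OF lj, of tp zj] tp2 by simp
  have I1: "(\<integral>\<^sup>+x. F1 c x \<partial>lborel) = ennreal (\<omega> / li ^ DIM('a) * ln T)" for c
    unfolding F1_def K1_def n_def \<omega>_def using X1[OF li, of T c] T1 by simp
  have I2: "(\<integral>\<^sup>+x. F2 c x \<partial>lborel) = ennreal (\<omega> / li ^ DIM('a) * (T powr (-n) / n))" for c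
    unfolding F2_def K2_def n_def \<omega>_def using X2[OF li, of T c] T1 by simp
  have "(\<integral>\<^sup>+x. ennreal ((ww zi li x * ww zj lj x) powr (n/2)) \<partial>lborel)
      \<le> (\<integral>\<^sup>+x. ennreal c0 * FA x + ennreal c1 * F1 zi x + ennreal c2 * F2 zi x + ennreal c1 * F1 zj x + ennreal c2 * F2 zj x \<partial>lborel)"
    by (rule nn_integral_mono) (rule pw)
  also have "\<dots> = ennreal c0 * (\<integral>\<^sup>+x. FA x \<partial>lborel) + ennreal c1 * (\<integral>\<^sup>+x. F1 zi x \<partial>lborel)
      + ennreal c2 * (\<integral>\<^sup>+x. F2 zi x \<partial>lborel) + ennreal c1 * (\<integral>\<^sup>+x. F1 zj x \<partial>lborel)
      + ennreal c2 * (\<integral>\<^sup>+x. F2 zj x \<partial>lborel)"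
    using FAm F1m F2m by (simp add: nn_integral_add nn_integral_cmult)
  also have "\<dots> = ennreal (c0 * (\<omega> / lj ^ DIM('a) * ln tp) + 2 * (c1 * (\<omega> / li ^ DIM('a) * ln T))
       + 2 * (c2 * (\<omega> / li ^ DIM('a) * (T powr (-n) / n))))"
  proof -
    have v: "0 \<le> \<omega> / lj ^ DIM('a) * ln tp" "0 \<le> \<omega> / li ^ DIM('a) * ln T"
      "0 \<le> \<omega> / li ^ DIM('a) * (T powr (-n) / n)"
      using om lj li tp2 T1 n1 by auto
    define yy1 where "yy1 = \<omega> / lj ^ DIM('a) * ln tp"
    define yy2 where "yy2 = \<omega> / li ^ DIM('a) * ln T"
    define yy3 where "yy3 = \<omega> / li ^ DIM('a) * (T powr (-n) / n)"
    have vv: "0 \<le> yy1" "0 \<le> yy2" "0 \<le> yy3" using v unfolding yy1_def yy2_def yy3_def by auto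
    have "ennreal c0 * ennreal yy1 + ennreal c1 * ennreal yy2 + ennreal c2 * ennreal yy3 + ennreal c1 * ennreal yy2 + ennreal c2 * ennreal yy3
        = ennreal (c0*yy1) + ennreal (c1*yy2) + ennreal (c2*yy3) + ennreal (c1*yy2) + ennreal (c2*yy3)"
      using vv cnn by (simp add: ennreal_mult)
    also have "\<dots> = ennreal (c0*yy1 + c1*yy2 + c2*yy3 + c1*yy2 + c2*yy3)"
      using vv cnn by (simp add: ennreal_plus[symmetric] add_nonneg_nonneg del: ennreal_plus)
    also have "c0*yy1 + c1*yy2 + c2*yy3 + c1*yy2 + c2*yy3 = c0 * yy1 + 2 * (c1 * yy2) + 2 * (c2 * yy3)" by simp
    finally show ?thesis unfolding IA I1 I2 yy1_def yy2_def yy3_def .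
  qed
  also have "\<dots> \<le> ennreal (\<omega>*(3*n+4)*40 powr (n/2)*eps powr (n/2)*(1+ln (1/eps)))"
  proof (rule ennreal_leI)
    have eps_eq: "eps = 1 / (li/lj + lj/li + li*lj*(norm (zi - zj))^2)" unfolding eps_def ..
    have pw1: "lj ^ DIM('a) = lj powr n" "li ^ DIM('a) = li powr n"
      unfolding n_def using li lj by (auto simp: powr_realpow)
    show "c0 * (\<omega> / lj ^ DIM('a) * ln tp) + 2 * (c1 * (\<omega> / li ^ DIM('a) * ln T))
       + 2 * (c2 * (\<omega> / li ^ DIM('a) * (T powr (-n) / n))) \<le> \<omega>*(3*n+4)*40 powr (n/2)*eps powr (n/2)*(1+ln (1/eps))"
    proof -
      have eq: "c0 * (\<omega> / lj powr n * ln tp) + 2 * (c1 * (\<omega> / li powr n * ln T))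
       + 2 * (c2 * (\<omega> / li powr n * (T powr (-n) / n))) = 2*n*cA*(\<omega>/lj powr n * ln tp) + 2*(cB*li powr n*n*b powr (n/2)) * (\<omega>/li powr n * ln T)
          + 2*(cB*li powr n*(2*n))*(\<omega>/li powr n*(T powr (-n)/n))"
        unfolding c0_def c1_def c2_def by (simp only: mult.assoc)
      show ?thesis unfolding pw1 eq
        by (rule scalar_bound[OF li lij n1 om norm_ge_zero D_def h_def U_def tp_def b_def T_def cA_def cB_def eps_eq])
    qed
  qed
  finally show ?thesis unfolding n_def \<omega>_def .
qed

lemma pair_sym:
  fixes zi zj :: "'a::euclidean_space" and li lj :: real
  assumes li: "li > 0" and lj: "lj > 0"
  defines "eps \<equiv> 1 / (li/lj + lj/li + li*lj*(norm (zi - zj))^2)"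
  shows "(\<integral>\<^sup>+x. ennreal ((ww zi li x * ww zj lj x) powr (real DIM('a)/2)) \<partial>lborel)
     \<le> ennreal (unit_ball_vol (real DIM('a)) * (3*real DIM('a)+4) * 40 powr (real DIM('a)/2) * eps powr (real DIM('a)/2) * (1 + ln (1/eps)))"
proof (cases "li \<le> lj")
  case True thus ?thesis unfolding eps_def using pair_int[OF li True] by simp
next
  case False
  hence "lj \<le> li" by simp
  from pair_int[OF lj this, of zj zi]
  have "(\<integral>\<^sup>+x. ennreal ((ww zj lj x * ww zi li x) powr (real DIM('a)/2)) \<partial>lborel)
     \<le> ennreal (unit_ball_vol (real DIM('a)) * (3*real DIM('a)+4) * 40 powr (real DIM('a)/2) * (1 / (lj/li + li/lj + lj*li*(norm (zj - zi))^2)) powr (real DIM('a)/2) * (1 + ln (1/(1 / (lj/li + li/lj + lj*li*(norm (zj - zi))^2)))))" .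
  moreover have "1 / (lj/li + li/lj + lj*li*(norm (zj - zi))^2) = eps"
    unfolding eps_def by (simp add: norm_minus_commute ac_simps)
  ultimately show ?thesis by (simp only: mult.commute[of "ww zj lj x" "ww zi li x" for x])
qed

lemma pair_q:
  fixes zi zj :: "'a::euclidean_space" and li lj :: real
  assumes li: "li > 0" and lj: "lj > 0" and n4: "DIM('a) \<ge> 4"
  shows "(\<integral>\<^sup>+x. ennreal ((ww zi li x * ww zj lj x) powr (real DIM('a)/2)) \<partial>lborel)
     \<le> ennreal (unit_ball_vol (real DIM('a)) * (3*real DIM('a)+4) * 40 powr (real DIM('a)/2)
          * (qint zi li zj lj powr (real DIM('a) / (real DIM('a) - 2)) * (1 + ln (1 / qint zi li zj lj))))"
    "0 < qint zi li zj lj" "qint zi li zj lj \<le> 1"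
proof -
  define n where "n = real DIM('a)"
  define m where "m = (n - 2) / 2"
  define S where "S = li/lj + lj/li + li*lj*(norm (zi - zj))^2"
  have n4': "n \<ge> 4" unfolding n_def using n4 by simp
  have m1: "m \<ge> 1" unfolding m_def using n4' by simp
  have S2: "S \<ge> 2"
  proof -
    have "li/lj + lj/li \<ge> 2"
    proof -
      have "(li - lj)^2 \<ge> 0" by simp
      hence "li^2 + lj^2 \<ge> 2*li*lj" by (simp add: power2_eq_square algebra_simps)
      hence "(li^2 + lj^2)/(li*lj) \<ge> 2" using li lj by (simp add: field_simps)
      thus ?thesis using li lj by (simp add: field_simps power2_eq_square)
    qed
    moreover have "li*lj*(norm (zi - zj))^2 \<ge> 0" using li lj by simp
    ultimately show ?thesis unfolding S_def by linarith
  qed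
  have Spos: "S > 0" using S2 by simp
  have q: "qint zi li zj lj = S powr (-m)"
    unfolding qint_def S_def m_def n_def by (simp add: minus_divide_left)
  have qpos: "qint zi li zj lj > 0" using q Spos by simp
  have eps: "1/S = qint zi li zj lj powr (1/m)"
  proof -
    have "(S powr (-m)) powr (1/m) = S powr (-m * (1/m))" by (rule powr_powr)
    also have "-m * (1/m) = -1" using m1 by simp
    finally show ?thesis unfolding q using Spos by (simp add: powr_minus_divide)
  qed
  have epsk: "(1/S) powr (n/2) = qint zi li zj lj powr (n / (n-2))"
  proof -
    have "2 * n / (n * 2 - 4) = n / (n - 2)" using n4' by (simp add: field_simps)
    thus ?thesis unfolding eps using m1 by (simp add: powr_powr m_def)
  qed
  have lnq: "ln (1 / qint zi li zj lj) = m * ln S"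
  proof -
    have "1 / S powr (-m) = S powr m" using Spos by (simp add: powr_minus divide_inverse)
    thus ?thesis unfolding q using Spos by simp
  qed
  have lnS: "ln S \<ge> 0" using S2 by simp
  have "(1 + ln (1/(1/S))) \<le> 1 + ln (1 / qint zi li zj lj)"
    unfolding lnq using lnS m1 by (simp add: mult_le_cancel_right1)
  hence B: "(1/S) powr (n/2) * (1 + ln (1/(1/S))) \<le> qint zi li zj lj powr (n / (n-2)) * (1 + ln (1 / qint zi li zj lj))"
    unfolding epsk by (intro mult_left_mono) auto
  have "(\<integral>\<^sup>+x. ennreal ((ww zi li x * ww zj lj x) powr (real DIM('a)/2)) \<partial>lborel)
     \<le> ennreal (unit_ball_vol n * (3*n+4) * 40 powr (n/2) * (1/S) powr (n/2) * (1 + ln (1/(1/S))))"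
    using pair_sym[OF li lj, of zi zj] unfolding S_def n_def by simp
  also have "\<dots> \<le> ennreal (unit_ball_vol n * (3*n+4) * 40 powr (n/2)
          * (qint zi li zj lj powr (n / (n-2)) * (1 + ln (1 / qint zi li zj lj))))"
    using B n4' by (intro ennreal_leI) (simp add: mult.assoc mult_left_mono)
  finally show "(\<integral>\<^sup>+x. ennreal ((ww zi li x * ww zj lj x) powr (real DIM('a)/2)) \<partial>lborel)
     \<le> ennreal (unit_ball_vol (real DIM('a)) * (3*real DIM('a)+4) * 40 powr (real DIM('a)/2)
          * (qint zi li zj lj powr (real DIM('a) / (real DIM('a) - 2)) * (1 + ln (1 / qint zi li zj lj))))"
    unfolding n_def .
  show "0 < qint zi li zj lj" by (rule qpos)
  have "S powr (-m) \<le> 1" using S2 m1 by (simp add: powr_minus inverse_le_1_iff ge_one_powr_ge_zero)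
  thus "qint zi li zj lj \<le> 1" using q by simp
qed


lemma mono_B:
  fixes q Q p :: real
  assumes "0 < q" "q \<le> Q" "Q \<le> 1" "1 \<le> p"
  shows "q powr p * (1 + ln (1/q)) \<le> Q powr p * (1 + ln (1/Q))"
proof -
  define t where "t = Q / q"
  have Qpos: "Q > 0" using assms by simp
  have t1: "t \<ge> 1" unfolding t_def using assms by simp
  define a where "a = ln t"
  define L where "L = ln (1/Q)"
  have a0: "a \<ge> 0" unfolding a_def using t1 by simp
  have L0: "L \<ge> 0" unfolding L_def using assms Qpos by simp
  have lnq: "ln (1/q) = a + L"
  proof -
    have e: "1/q = t * (1/Q)" unfolding t_def using assms Qpos by simp
    have "ln (t * (1/Q)) = ln t + ln (1/Q)" using t1 Qpos by (intro ln_mult_pos) auto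
    thus ?thesis unfolding a_def L_def e .
  qed
  have Qp: "Q powr p = t powr p * q powr p"
  proof -
    have "Q = t * q" unfolding t_def using assms by simp
    thus ?thesis by (simp add: powr_mult)
  qed
  have "1 + a \<le> t" unfolding a_def using ln_le_minus_one[of t] t1 by simp
  also have "t \<le> t powr p"
  proof -
    have "t powr 1 \<le> t powr p" using t1 assms(4) by (intro powr_mono) auto
    thus ?thesis using t1 by simp
  qed
  finally have ta: "1 + a \<le> t powr p" .
  have "1 + (a + L) \<le> (1+a)*(1+L)" using a0 L0 by (simp add: algebra_simps)
  also have "\<dots> \<le> t powr p * (1+L)" using ta L0 by (intro mult_right_mono) auto
  finally have "1 + (a + L) \<le> t powr p * (1+L)" .
  hence "q powr p * (1 + (a + L)) \<le> q powr p * (t powr p * (1+L))" by (intro mult_left_mono) auto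
  thus ?thesis unfolding lnq Qp L_def[symmetric] by (simp add: mult_ac)
qed

lemma three_term:
  fixes w1 w2 w3 m :: real
  assumes "w1 > 0" "w2 > 0" "w3 > 0" "m \<ge> 1"
  shows "w1 powr 2 * w2 powr m * w3 powr m \<le> (w1*w2) powr (m+1) + (w1*w3) powr (m+1) + (w2*w3) powr (m+1)"
proof -
  have nn: "(w1*w2) powr (m+1) \<ge> 0" "(w1*w3) powr (m+1) \<ge> 0" "(w2*w3) powr (m+1) \<ge> 0" by auto
  have w12: "w1 powr 2 = w1 * w1" using assms by (simp add: powr_realpow power2_eq_square)
  have spl: "x powr m = x powr (m-1) * x" if "x > 0" for x
  proof -
    have "x powr (m-1) * x = x powr (m-1) * x powr 1" using that by simp
    also have "\<dots> = x powr (m-1+1)" by (rule powr_add[symmetric])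
    finally show ?thesis by simp
  qed
  have pm1: "x powr (m+1) = x powr m * x" if "x > 0" for x
    using that by (simp add: powr_add)
  consider "w1 \<le> w2 \<and> w1 \<le> w3" | "w2 \<le> w1 \<and> w2 \<le> w3" | "w3 \<le> w1 \<and> w3 \<le> w2" by linarith
  thus ?thesis
  proof cases
    case 1
    have "w1 * w1 \<le> w2 * w3" using 1 assms by (intro mult_mono) auto
    hence "(w1 * w1) * (w2 powr m * w3 powr m) \<le> (w2 * w3) * (w2 powr m * w3 powr m)"
      by (rule mult_right_mono) simp
    hence "w1 powr 2 * w2 powr m * w3 powr m \<le> (w2 * w3) * (w2 powr m * w3 powr m)"
      unfolding w12 by (simp only: mult.assoc)
    also have "\<dots> = (w2*w3) powr (m+1)" using assms by (simp add: pm1 powr_mult mult_ac)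
    finally show ?thesis using nn by linarith
  next
    case 2
    have "w2 powr (m-1) \<le> w1 powr (m-1)" using 2 assms by (intro powr_mono2) auto
    hence "w2 powr (m-1) * w2 \<le> w1 powr (m-1) * w3" using 2 assms by (intro mult_mono) auto
    hence "w2 powr m \<le> w1 powr (m-1) * w3" using spl[OF assms(2)] by simp
    hence "w1 powr 2 * w2 powr m * w3 powr m \<le> w1 powr 2 * (w1 powr (m-1) * w3) * w3 powr m"
      by (intro mult_right_mono mult_left_mono) auto
    also have "\<dots> = (w1 * w1 powr (m-1)) * w1 * (w3 powr m * w3)" unfolding w12 by (simp add: mult_ac)
    also have "w1 * w1 powr (m-1) = w1 powr m" using spl[OF assms(1)] by simp
    also have "w1 powr m * w1 * (w3 powr m * w3) = (w1*w3) powr (m+1)"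
      using assms by (simp add: pm1 powr_mult mult_ac)
    finally show ?thesis using nn by linarith
  next
    case 3
    have "w3 powr (m-1) \<le> w1 powr (m-1)" using 3 assms by (intro powr_mono2) auto
    hence "w3 powr (m-1) * w3 \<le> w1 powr (m-1) * w2" using 3 assms by (intro mult_mono) auto
    hence "w3 powr m \<le> w1 powr (m-1) * w2" using spl[OF assms(3)] by simp
    hence "w1 powr 2 * w2 powr m * w3 powr m \<le> w1 powr 2 * w2 powr m * (w1 powr (m-1) * w2)"
      by (intro mult_left_mono) auto
    also have "\<dots> = (w1 * w1 powr (m-1)) * w1 * (w2 powr m * w2)" unfolding w12 by (simp add: mult_ac)
    also have "w1 * w1 powr (m-1) = w1 powr m" using spl[OF assms(1)] by simp
    also have "w1 powr m * w1 * (w2 powr m * w2) = (w1*w2) powr (m+1)"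
      using assms by (simp add: pm1 powr_mult mult_ac)
    finally show ?thesis using nn by linarith
  qed
qed

lemma powr_log_bound:
  fixes Q a :: real
  assumes "0 < Q" "Q \<le> 1" "a > 0"
  shows "Q powr a * (1 + ln (1/Q)) \<le> 1 + 1/a"
proof -
  have "Q powr a \<le> 1" using assms by (intro powr_le1) auto
  have y: "(1/Q) powr a > 0" using assms by simp
  have "ln ((1/Q) powr a) \<le> (1/Q) powr a" using ln_le_minus_one[OF y] by simp
  hence "a * ln (1/Q) \<le> (1/Q) powr a" using assms by (simp add: ln_powr)
  hence "ln (1/Q) \<le> (1/Q) powr a / a" using assms by (simp add: field_simps)
  hence "Q powr a * ln (1/Q) \<le> Q powr a * ((1/Q) powr a / a)" by (intro mult_left_mono) auto
  also have "\<dots> = (Q powr a * (1/Q) powr a) / a" by simp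
  also have "\<dots> = (Q * (1/Q)) powr a / a" by (simp only: powr_mult)
  also have "\<dots> = 1/a" using assms by simp
  finally show ?thesis using \<open>Q powr a \<le> 1\<close> by (simp add: distrib_left)
qed


lemma ww_meas0[measurable]: "ww z l \<in> borel_measurable borel"
proof -
  have "(\<lambda>x. l / (1 + l^2 * (norm (x - z))^2)) \<in> borel_measurable borel" by measurable
  thus ?thesis unfolding ww_def[abs_def] .
qed

lemma ww_meas: "(\<lambda>x. ennreal ((ww zi li x * ww zj lj x) powr k)) \<in> borel_measurable (lborel::'a::euclidean_space measure)"
  unfolding ww_def by measurable

lemma int3:
  fixes z1 z2 z3 :: "'a::euclidean_space" and l1 l2 l3 K :: real
  assumes l: "l1 > 0" "l2 > 0" "l3 > 0" and n6: "DIM('a) \<ge> 6" and K: "K \<ge> 0"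
  defines "Q \<equiv> max (qint z1 l1 z2 l2) (max (qint z1 l1 z3 l3) (qint z2 l2 z3 l3))"
  defines "CP \<equiv> unit_ball_vol (real DIM('a)) * (3*real DIM('a)+4) * 40 powr (real DIM('a)/2)"
  shows "(\<integral>\<^sup>+x. ennreal (K * ((ww z1 l1 x * ww z2 l2 x) powr (real DIM('a)/2) + (ww z1 l1 x * ww z3 l3 x) powr (real DIM('a)/2)
             + (ww z2 l2 x * ww z3 l3 x) powr (real DIM('a)/2))) \<partial>lborel)
     \<le> ennreal (3 * K * CP * (Q powr (real DIM('a) / (real DIM('a) - 2)) * (1 + ln (1/Q))))"
proof -
  let ?k = "real DIM('a)/2"
  let ?p = "real DIM('a) / (real DIM('a) - 2)"
  define B where "B = (\<lambda>q::real. q powr ?p * (1 + ln (1/q)))"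
  have n4: "DIM('a) \<ge> 4" using n6 by simp
  have p1: "?p \<ge> 1" using n6 by simp
  have CP: "CP \<ge> 0" unfolding CP_def by simp
  have Q1: "Q \<le> 1" unfolding Q_def using pair_q(3)[OF l(1) l(2) n4, of z1 z2] pair_q(3)[OF l(1) l(3) n4, of z1 z3]
      pair_q(3)[OF l(2) l(3) n4, of z2 z3] by simp
  have each: "(\<integral>\<^sup>+x. ennreal ((ww zi li x * ww zj lj x) powr ?k) \<partial>lborel) \<le> ennreal (CP * B Q)"
    if "li > 0" "lj > 0" "qint zi li zj lj \<le> Q" for zi zj :: 'a and li lj
  proof -
    have "(\<integral>\<^sup>+x. ennreal ((ww zi li x * ww zj lj x) powr ?k) \<partial>lborel) \<le> ennreal (CP * B (qint zi li zj lj))"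
      using pair_q(1)[OF that(1,2) n4, of zi zj] unfolding CP_def B_def by (simp add: mult.assoc)
    also have "\<dots> \<le> ennreal (CP * B Q)"
      using mono_B[OF pair_q(2)[OF that(1,2) n4] that(3) Q1 p1] CP unfolding B_def
      by (intro ennreal_leI mult_left_mono) auto
    finally show ?thesis .
  qed
  have q12: "qint z1 l1 z2 l2 \<le> Q" and q13: "qint z1 l1 z3 l3 \<le> Q" and q23: "qint z2 l2 z3 l3 \<le> Q"
    unfolding Q_def by auto
  have nn: "(ww zi li x * ww zj lj x) powr ?k \<ge> 0" for zi zj :: 'a and li lj x by simp
  have "(\<integral>\<^sup>+x. ennreal (K * ((ww z1 l1 x * ww z2 l2 x) powr ?k + (ww z1 l1 x * ww z3 l3 x) powr ?k
             + (ww z2 l2 x * ww z3 l3 x) powr ?k)) \<partial>lborel)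
      = (\<integral>\<^sup>+x. ennreal K * (ennreal ((ww z1 l1 x * ww z2 l2 x) powr ?k) + ennreal ((ww z1 l1 x * ww z3 l3 x) powr ?k)
             + ennreal ((ww z2 l2 x * ww z3 l3 x) powr ?k)) \<partial>lborel)"
    using K nn by (simp add: ennreal_mult add_nonneg_nonneg)
  also have "\<dots> = ennreal K * ((\<integral>\<^sup>+x. ennreal ((ww z1 l1 x * ww z2 l2 x) powr ?k) \<partial>lborel)
       + (\<integral>\<^sup>+x. ennreal ((ww z1 l1 x * ww z3 l3 x) powr ?k) \<partial>lborel)
       + (\<integral>\<^sup>+x. ennreal ((ww z2 l2 x * ww z3 l3 x) powr ?k) \<partial>lborel))"
  proof -
    show ?thesis
      apply (subst nn_integral_cmult, measurable)
      apply (subst nn_integral_add, measurable)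
      apply (subst nn_integral_add, measurable)
      done
  qed
  also have "\<dots> \<le> ennreal K * (ennreal (CP * B Q) + ennreal (CP * B Q) + ennreal (CP * B Q))"
    using each[OF l(1) l(2) q12] each[OF l(1) l(3) q13] each[OF l(2) l(3) q23]
    by (intro mult_left_mono add_mono) auto
  also have "\<dots> = ennreal (3 * K * CP * B Q)"
  proof -
    have Bnn: "B Q \<ge> 0"
    proof -
      have "Q > 0" unfolding Q_def using pair_q(2)[OF l(1) l(2) n4, of z1 z2] by simp
      thus ?thesis unfolding B_def using Q1 by simp
    qed
    hence "CP * B Q \<ge> 0" using CP by simp
    thus ?thesis using K by (simp add: ennreal_mult[symmetric] ennreal_plus[symmetric] del: ennreal_plus) (simp add: algebra_simps)
  qed
  finally show ?thesis unfolding B_def by (simp add: mult.assoc)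
qed


lemma bubble_eq:
  "bubble z l x = (real DIM('a) * (real DIM('a) - 2)) powr ((real DIM('a) - 2) / 4) * ww z l x powr ((real DIM('a) - 2) / 2)"
  for z x :: "'a::euclidean_space"
  unfolding bubble_def ww_def ..

lemma integrand6:
  fixes z1 z2 z3 x :: "'a::euclidean_space" and l1 l2 l3 :: real
  assumes l: "l1 > 0" "l2 > 0" "l3 > 0" and n6: "DIM('a) = 6"
  defines "cc \<equiv> (real DIM('a) * (real DIM('a) - 2)) powr ((real DIM('a) - 2) / 4)"
  shows "bubble z1 l1 x * bubble z2 l2 x * bubble z3 l3 x
     \<le> (cc*cc*cc) * ((ww z1 l1 x * ww z2 l2 x) powr (real DIM('a)/2) + (ww z1 l1 x * ww z3 l3 x) powr (real DIM('a)/2)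
             + (ww z2 l2 x * ww z3 l3 x) powr (real DIM('a)/2))"
proof -
  have w: "ww z1 l1 x > 0" "ww z2 l2 x > 0" "ww z3 l3 x > 0" using l by (auto intro: ww_pos)
  have e1: "(real DIM('a) - 2) / 2 = 2" "real DIM('a) / 2 = 2 + 1" using n6 by auto
  have cc0: "cc \<ge> 0" unfolding cc_def by simp
  have "bubble z1 l1 x * bubble z2 l2 x * bubble z3 l3 x = (cc*cc*cc) * (ww z1 l1 x powr 2 * ww z2 l2 x powr 2 * ww z3 l3 x powr 2)"
    unfolding bubble_eq cc_def e1(1) by (simp add: mult_ac)
  also have "\<dots> \<le> (cc*cc*cc) * ((ww z1 l1 x * ww z2 l2 x) powr (2+1) + (ww z1 l1 x * ww z3 l3 x) powr (2+1)
             + (ww z2 l2 x * ww z3 l3 x) powr (2+1))"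
    using three_term[OF w, of 2] cc0 by (intro mult_left_mono) auto
  finally show ?thesis unfolding e1(2) .
qed

lemma integrand7:
  fixes z1 z2 z3 x :: "'a::euclidean_space" and l1 l2 l3 :: real
  assumes l: "l1 > 0" "l2 > 0" "l3 > 0" and n7: "DIM('a) \<ge> 7"
  defines "cc \<equiv> (real DIM('a) * (real DIM('a) - 2)) powr ((real DIM('a) - 2) / 4)"
  shows "bubble z1 l1 x powr (crit_exp TYPE('a) - 1) * bubble z2 l2 x * bubble z3 l3 x
     \<le> (cc powr (crit_exp TYPE('a) - 1)*cc*cc) * ((ww z1 l1 x * ww z2 l2 x) powr (real DIM('a)/2) + (ww z1 l1 x * ww z3 l3 x) powr (real DIM('a)/2)
             + (ww z2 l2 x * ww z3 l3 x) powr (real DIM('a)/2))"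
proof -
  define n where "n = real DIM('a)"
  define m where "m = (n - 2) / 2"
  have n7': "n \<ge> 7" unfolding n_def using n7 by simp
  have w: "ww z1 l1 x > 0" "ww z2 l2 x > 0" "ww z3 l3 x > 0" using l by (auto intro: ww_pos)
  have m1: "m \<ge> 1" unfolding m_def using n7' by simp
  have pm: "crit_exp TYPE('a) - 1 = 4 / (n - 2)" unfolding crit_exp_def n_def using n7 by (simp add: field_simps)
  have e2: "m * (crit_exp TYPE('a) - 1) = 2" unfolding pm m_def using n7' by (simp add: field_simps)
  have e3: "n / 2 = m + 1" unfolding m_def by (simp add: field_simps)
  have cc0: "cc \<ge> 0" unfolding cc_def by simp
  have b1: "bubble z1 l1 x powr (crit_exp TYPE('a) - 1) = cc powr (crit_exp TYPE('a) - 1) * ww z1 l1 x powr 2"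
  proof -
    have "bubble z1 l1 x powr (crit_exp TYPE('a) - 1) = (cc * ww z1 l1 x powr m) powr (crit_exp TYPE('a) - 1)"
      unfolding bubble_eq cc_def m_def n_def ..
    also have "\<dots> = cc powr (crit_exp TYPE('a) - 1) * (ww z1 l1 x powr m) powr (crit_exp TYPE('a) - 1)"
      by (rule powr_mult)
    also have "(ww z1 l1 x powr m) powr (crit_exp TYPE('a) - 1) = ww z1 l1 x powr 2"
      using e2 by (simp add: powr_powr)
    finally show ?thesis .
  qed
  have "bubble z1 l1 x powr (crit_exp TYPE('a) - 1) * bubble z2 l2 x * bubble z3 l3 x
      = (cc powr (crit_exp TYPE('a) - 1)*cc*cc) * (ww z1 l1 x powr 2 * ww z2 l2 x powr m * ww z3 l3 x powr m)"
    by (simp only: b1) (simp add: bubble_eq cc_def m_def n_def mult_ac)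
  also have "\<dots> \<le> (cc powr (crit_exp TYPE('a) - 1)*cc*cc) * ((ww z1 l1 x * ww z2 l2 x) powr (m+1) + (ww z1 l1 x * ww z3 l3 x) powr (m+1)
             + (ww z2 l2 x * ww z3 l3 x) powr (m+1))"
    using three_term[OF w m1] cc0 by (intro mult_left_mono) auto
  finally show ?thesis unfolding e3[symmetric] n_def .
qed


theorem lemmaA3:
  assumes "DIM('a::euclidean_space) \<ge> 6"
  shows "\<exists>\<delta>0>0. \<exists>C>0. \<forall>(z1::'a) z2 z3 l1 l2 l3 \<delta>.
     l1 > 0 \<and> l2 > 0 \<and> l3 > 0 \<and> \<delta> \<le> \<delta>0 \<and>
     max (qint z1 l1 z2 l2) (max (qint z1 l1 z3 l3) (qint z2 l2 z3 l3)) < \<delta> \<longrightarrow>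
     (let Q = max (qint z1 l1 z2 l2) (max (qint z1 l1 z3 l3) (qint z2 l2 z3 l3)) in
       (DIM('a) = 6 \<longrightarrow>
          (\<integral>\<^sup>+ x. ennreal (bubble z1 l1 x * bubble z2 l2 x * bubble z3 l3 x) \<partial>lborel)
            \<le> ennreal (C * Q powr (3/2) * ln (1 / Q))) \<and>
       (DIM('a) \<ge> 7 \<longrightarrow>
          (\<integral>\<^sup>+ x. ennreal (bubble z1 l1 x powr (crit_exp TYPE('a) - 1) * bubble z2 l2 x * bubble z3 l3 x) \<partial>lborel)
            \<le> ennreal (C * Q powr ((real DIM('a) - 1) / (real DIM('a) - 2)) * \<bar>ln Q\<bar> powr ((real DIM('a) - 5) / real DIM('a)))))"
proof -
  define cc where "cc = (real DIM('a) * (real DIM('a) - 2)) powr ((real DIM('a) - 2) / 4)"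
  define Kc where "Kc = (if DIM('a) = 6 then cc*cc*cc else cc powr (crit_exp TYPE('a) - 1)*cc*cc)"
  define CP where "CP = unit_ball_vol (real DIM('a)) * (3*real DIM('a)+4) * 40 powr (real DIM('a)/2)"
  define C where "C = 3*Kc*CP*real DIM('a)"
  have n6: "real DIM('a) \<ge> 6" using assms by simp
  have ccpos: "cc > 0" unfolding cc_def using n6 by simp
  have Kcpos: "Kc > 0" unfolding Kc_def using ccpos by simp
  have CPpos: "CP > 0" unfolding CP_def by (intro mult_pos_pos) auto
  have Cpos: "C > 0" unfolding C_def using Kcpos CPpos n6 by simp
  show ?thesis
  proof (rule exI[of _ "exp (-1)"], rule conjI[OF _ exI[of _ C]], simp, rule conjI[OF Cpos], intro allI impI)
    fix z1 z2 z3 :: 'a and l1 l2 l3 \<delta> :: real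
    assume H: "l1 > 0 \<and> l2 > 0 \<and> l3 > 0 \<and> \<delta> \<le> exp (-1) \<and>
      max (qint z1 l1 z2 l2) (max (qint z1 l1 z3 l3) (qint z2 l2 z3 l3)) < \<delta>"
    define Q where "Q = max (qint z1 l1 z2 l2) (max (qint z1 l1 z3 l3) (qint z2 l2 z3 l3))"
    have l: "l1 > 0" "l2 > 0" "l3 > 0" using H by auto
    have n4: "DIM('a) \<ge> 4" using assms by simp
    have Qpos: "Q > 0" unfolding Q_def using pair_q(2)[OF l(1) l(2) n4, of z1 z2] by simp
    have Qsmall: "Q < exp (-1)" using H unfolding Q_def by linarith
    have L1: "ln (1/Q) \<ge> 1"
    proof -
      have "ln Q < -1" using Qsmall Qpos by (metis ln_exp ln_less_cancel_iff exp_gt_zero)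
      thus ?thesis using Qpos by (simp add: ln_div)
    qed
    have Q1: "Q \<le> 1" using Qsmall by (smt (verit) exp_le_one_iff)
    define S where "S = (\<lambda>x. (ww z1 l1 x * ww z2 l2 x) powr (real DIM('a)/2) + (ww z1 l1 x * ww z3 l3 x) powr (real DIM('a)/2)
             + (ww z2 l2 x * ww z3 l3 x) powr (real DIM('a)/2))"
    have I: "(\<integral>\<^sup>+x. ennreal (Kc * S x) \<partial>lborel)
       \<le> ennreal (3 * Kc * CP * (Q powr (real DIM('a) / (real DIM('a) - 2)) * (1 + ln (1/Q))))"
      unfolding S_def Q_def CP_def using int3[OF l(1) l(2) l(3) assms, of Kc z1 z2 z3] Kcpos by simp
    show "let Q = max (qint z1 l1 z2 l2) (max (qint z1 l1 z3 l3) (qint z2 l2 z3 l3)) in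
       (DIM('a) = 6 \<longrightarrow>
          (\<integral>\<^sup>+ x. ennreal (bubble z1 l1 x * bubble z2 l2 x * bubble z3 l3 x) \<partial>lborel)
            \<le> ennreal (C * Q powr (3/2) * ln (1 / Q))) \<and>
       (DIM('a) \<ge> 7 \<longrightarrow>
          (\<integral>\<^sup>+ x. ennreal (bubble z1 l1 x powr (crit_exp TYPE('a) - 1) * bubble z2 l2 x * bubble z3 l3 x) \<partial>lborel)
            \<le> ennreal (C * Q powr ((real DIM('a) - 1) / (real DIM('a) - 2)) * \<bar>ln Q\<bar> powr ((real DIM('a) - 5) / real DIM('a))))"
      unfolding Let_def Q_def[symmetric]
    proof (intro conjI impI)
      assume d6: "DIM('a) = 6"
      have "(\<integral>\<^sup>+ x. ennreal (bubble z1 l1 x * bubble z2 l2 x * bubble z3 l3 x) \<partial>lborel) \<le> (\<integral>\<^sup>+x. ennreal (Kc * S x) \<partial>lborel)"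
        using integrand6[OF l d6] unfolding Kc_def S_def cc_def using d6
        by (intro nn_integral_mono ennreal_leI) simp
      also note I
      also have "ennreal (3 * Kc * CP * (Q powr (real DIM('a) / (real DIM('a) - 2)) * (1 + ln (1/Q))))
          \<le> ennreal (C * Q powr (3/2) * ln (1 / Q))"
      proof (rule ennreal_leI)
        have e: "real DIM('a) / (real DIM('a) - 2) = 3/2" using d6 by simp
        have "1 + ln (1/Q) \<le> real DIM('a) * ln (1/Q)" using L1 d6 by simp
        hence "3*Kc*CP*(Q powr (3/2) * (1 + ln (1/Q))) \<le> 3*Kc*CP*(Q powr (3/2) * (real DIM('a) * ln (1/Q)))"
          using Kcpos CPpos by (intro mult_left_mono) auto
        thus "3 * Kc * CP * (Q powr (real DIM('a) / (real DIM('a) - 2)) * (1 + ln (1/Q))) \<le> C * Q powr (3/2) * ln (1 / Q)"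
          unfolding e C_def by (simp add: mult_ac)
      qed
      finally show "(\<integral>\<^sup>+ x. ennreal (bubble z1 l1 x * bubble z2 l2 x * bubble z3 l3 x) \<partial>lborel)
            \<le> ennreal (C * Q powr (3/2) * ln (1 / Q))" .
    next
      assume d7: "DIM('a) \<ge> 7"
      have n7: "real DIM('a) \<ge> 7" using d7 by simp
      have "(\<integral>\<^sup>+ x. ennreal (bubble z1 l1 x powr (crit_exp TYPE('a) - 1) * bubble z2 l2 x * bubble z3 l3 x) \<partial>lborel)
          \<le> (\<integral>\<^sup>+x. ennreal (Kc * S x) \<partial>lborel)"
        using integrand7[OF l d7] unfolding Kc_def S_def cc_def using d7
        by (intro nn_integral_mono ennreal_leI) simp
      also note I
      also have "ennreal (3 * Kc * CP * (Q powr (real DIM('a) / (real DIM('a) - 2)) * (1 + ln (1/Q))))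
          \<le> ennreal (C * Q powr ((real DIM('a) - 1) / (real DIM('a) - 2)) * \<bar>ln Q\<bar> powr ((real DIM('a) - 5) / real DIM('a)))"
      proof (rule ennreal_leI)
        define n where "n = real DIM('a)"
        have ex: "n / (n - 2) = (n - 1) / (n - 2) + 1 / (n - 2)" unfolding n_def using n7 by (simp add: field_simps)
        have qs: "Q powr (n / (n - 2)) = Q powr ((n - 1) / (n - 2)) * Q powr (1 / (n - 2))"
          unfolding ex by (rule powr_add)
        have b: "Q powr (1 / (n - 2)) * (1 + ln (1/Q)) \<le> 1 + 1 / (1 / (n - 2))"
          using powr_log_bound[OF Qpos Q1, of "1/(n-2)"] n7 unfolding n_def by simp
        have absl: "\<bar>ln Q\<bar> = ln (1/Q)" using L1 Qpos by (simp add: ln_div)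
        have lp: "\<bar>ln Q\<bar> powr ((n - 5) / n) \<ge> 1" unfolding absl using L1 n7 unfolding n_def
          by (intro ge_one_powr_ge_zero) auto
        have "Q powr (1 / (n - 2)) * (1 + ln (1/Q)) \<le> n * \<bar>ln Q\<bar> powr ((n - 5) / n)"
        proof -
          have "1 + 1 / (1 / (n - 2)) = n - 1" using n7 unfolding n_def by simp
          hence "Q powr (1 / (n - 2)) * (1 + ln (1/Q)) \<le> n * 1" using b by simp
          also have "n * 1 \<le> n * \<bar>ln Q\<bar> powr ((n - 5) / n)" using lp n7 unfolding n_def by (intro mult_left_mono) auto
          finally show ?thesis .
        qed
        hence "3*Kc*CP*(Q powr ((n - 1) / (n - 2)) * (Q powr (1 / (n - 2)) * (1 + ln (1/Q))))
            \<le> 3*Kc*CP*(Q powr ((n - 1) / (n - 2)) * (n * \<bar>ln Q\<bar> powr ((n - 5) / n)))"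
          using Kcpos CPpos by (intro mult_left_mono) auto
        thus "3 * Kc * CP * (Q powr (real DIM('a) / (real DIM('a) - 2)) * (1 + ln (1/Q)))
            \<le> C * Q powr ((real DIM('a) - 1) / (real DIM('a) - 2)) * \<bar>ln Q\<bar> powr ((real DIM('a) - 5) / real DIM('a))"
          unfolding C_def n_def[symmetric] qs by (simp add: mult_ac)
      qed
      finally show "(\<integral>\<^sup>+ x. ennreal (bubble z1 l1 x powr (crit_exp TYPE('a) - 1) * bubble z2 l2 x * bubble z3 l3 x) \<partial>lborel)
            \<le> ennreal (C * Q powr ((real DIM('a) - 1) / (real DIM('a) - 2)) * \<bar>ln Q\<bar> powr ((real DIM('a) - 5) / real DIM('a)))" .
    qed
  qed
qed

end
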